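(* Let $E\subset\mathbb{R}^n$ be a fixed set and let $m\geq 2$. Let $\mathbf{A}\in\mathbb{R}^{m\times n}$ be a random matrix whose rows $\mathbf{a}_1,\dots,\mathbf{a}_m$ are independent copies of a random vector $\mathbf{a}\in\mathbb{R}^n$. Let $\mathbf{B}\in\mathbb{R}^{\lfloor m/2\rfloor\times n}$ be the matrix with rows $\mathbf{b}_i=(\mathbf{a}_{2i-1}-\mathbf{a}_{2i})/\sqrt{2}$, $i=1,\dots,\lfloor m/2\rfloor$, and let $\mathbf{b}$ denote a random vector with the same distribution as $\mathbf{b}_1$. Let $\{\epsilon_k\}_{k=1}^{\lfloor m/2\rfloor}$ be a Rademacher sequence independent of everything else and set $\mathbf{h}=\frac{1}{\sqrt{\lfloor m/2\rfloor}}\sum_{k=1}^{\lfloor m/2\rfloor}\epsilon_k\mathbf{b}_k$. For $\xi>0$ define $$Q_{\xi}(E,\mathbf{b})=\inf_{\mathbf{u}\in E}\mathbb{P}\big(|\langle\mathbf{b},\mathbf{u}\rangle|\geq\xi\big),\qquad W_{\lfloor m/2\rfloor}(E,\mathbf{b})=\mathbb{E}\Big[\sup_{\mathbf{u}\in E}\langle\mathbf{h},\mathbf{u}\rangle\Big].$$ Then for every $t>0$ and $\xi>0$, with probability at least $1-e^{-2t^2}$, $$\inf_{\mathbf{v}\in E}\|\mathbf{A}\mathbf{v}\|_2\geq \xi\sqrt{\tfrac{m-1}{2}}\,Q_{2\xi}(E,\mathbf{b})-\xi t-2W_{\lfloor m/2\rfloor}(E,\mathbf{b}).$$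
   Context: A Rademacher variable takes the values $1$ and $-1$ with probability $1/2$ each; a Rademacher sequence is a sequence of independent Rademacher variables. *)

theory Defs
  imports "HOL-Probability.Probability"
begin

definition rademacher :: "'w measure \<Rightarrow> ('w \<Rightarrow> real) \<Rightarrow> bool" where
  "rademacher M X \<longleftrightarrow> X \<in> borel_measurable M
     \<and> measure M {w \<in> space M. X w = 1} = 1/2
     \<and> measure M {w \<in> space M. X w = -1} = 1/2"

definition brow :: "(nat \<Rightarrow> 'w \<Rightarrow> real^'n) \<Rightarrow> nat \<Rightarrow> 'w \<Rightarrow> real^'n" where
  "brow a i w = (1 / sqrt 2) *\<^sub>R (a (2*i - 1) w - a (2*i) w)"

definition hvec :: "nat \<Rightarrow> (nat \<Rightarrow> 'w \<Rightarrow> real^'n) \<Rightarrow> (nat \<Rightarrow> 'w \<Rightarrow> real) \<Rightarrow> 'w \<Rightarrow> real^'n" where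
  "hvec m a eps w = (1 / sqrt (real (m div 2))) *\<^sub>R (\<Sum>k=1..m div 2. eps k w *\<^sub>R brow a k w)"

definition Qxi :: "'w measure \<Rightarrow> real \<Rightarrow> (real^'n) set \<Rightarrow> ('w \<Rightarrow> real^'n) \<Rightarrow> real" where
  "Qxi M xi E b = (INF u\<in>E. measure M {w \<in> space M. \<bar>b w \<bullet> u\<bar> \<ge> xi})"

definition Wmean :: "'w measure \<Rightarrow> (real^'n) set \<Rightarrow> ('w \<Rightarrow> real^'n) \<Rightarrow> real" where
  "Wmean M E h = (\<integral>w. (SUP u\<in>E. h w \<bullet> u) \<partial>M)"

definition Anorm :: "nat \<Rightarrow> (nat \<Rightarrow> 'w \<Rightarrow> real^'n) \<Rightarrow> 'w \<Rightarrow> real^'n \<Rightarrow> real" where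
  "Anorm m a w v = sqrt (\<Sum>i=1..m. (a i w \<bullet> v)\<^sup>2)"

end

theory Submission
  imports Defs "HOL-Probability.Probability"
begin

lemma mcd_mgf:
  fixes \<mu> :: "'a measure" and l c :: real and I :: "'i set"
  assumes P: "prob_space \<mu>" and fin: "finite I" and l: "l > 0"
    and "f \<in> borel_measurable (PiM I (\<lambda>_. \<mu>))"
    and "\<And>x. x \<in> space (PiM I (\<lambda>_. \<mu>)) \<Longrightarrow> \<bar>f x\<bar> \<le> B"
    and "\<And>i x y. i \<in> I \<Longrightarrow> x \<in> space (PiM I (\<lambda>_. \<mu>)) \<Longrightarrow> y \<in> space \<mu> \<Longrightarrow> \<bar>f (x(i:=y)) - f x\<bar> \<le> c"
  shows "(\<integral>\<^sup>+x. ennreal (exp (l * (f x - (\<integral>x. f x \<partial>PiM I (\<lambda>_. \<mu>))))) \<partial>PiM I (\<lambda>_. \<mu>))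
        \<le> ennreal (exp (l\<^sup>2 * (real (card I) * c\<^sup>2) / 8))"
  using fin assms(4-6)
proof (induction I arbitrary: f B rule: finite_induct)
  case (empty f B)
  interpret prob_space "PiM ({}::'i set) (\<lambda>_. \<mu>)" by (rule prob_space_PiM) (use P in auto)
  have sp: "space (PiM ({}::'i set) (\<lambda>_. \<mu>)) = {\<lambda>_. undefined}" by (simp add: space_PiM)
  have "(\<integral>x. f x \<partial>PiM ({}::'i set) (\<lambda>_. \<mu>)) = (\<integral>x. f (\<lambda>_. undefined) \<partial>PiM ({}::'i set) (\<lambda>_. \<mu>))"
    by (rule Bochner_Integration.integral_cong) (auto simp: sp)
  then have "(\<integral>x. f x \<partial>PiM ({}::'i set) (\<lambda>_. \<mu>)) = f (\<lambda>_. undefined)" by (simp add: prob_space)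
  then have "(\<integral>\<^sup>+x. ennreal (exp (l * (f x - (\<integral>x. f x \<partial>PiM ({}::'i set) (\<lambda>_. \<mu>))))) \<partial>PiM ({}::'i set) (\<lambda>_. \<mu>)) = 
      (\<integral>\<^sup>+x. 1 \<partial>PiM ({}::'i set) (\<lambda>_. \<mu>))"
    by (intro nn_integral_cong) (simp add: sp)
  also have "\<dots> = 1" by (simp add: emeasure_space_1)
  finally show ?case by simp
next
  case (insert i I f B)
  interpret PS: product_sigma_finite "\<lambda>_. \<mu>"
    unfolding product_sigma_finite_def using prob_space_imp_sigma_finite[OF P] by simp
  interpret \<mu>: prob_space \<mu> by (rule P)
  interpret PI: prob_space "PiM I (\<lambda>_. \<mu>)" by (rule prob_space_PiM) (use P in auto)
  interpret PII: prob_space "PiM (insert i I) (\<lambda>_. \<mu>)" by (rule prob_space_PiM) (use P in auto)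
  note fm[measurable] = insert.prems(1)
  have fm2[measurable]: "(\<lambda>(x, y). f (x(i := y))) \<in> borel_measurable (PiM I (\<lambda>_. \<mu>) \<Otimes>\<^sub>M \<mu>)"
    using measurable_comp[OF measurable_add_dim[of i I "\<lambda>_. \<mu>"] fm] by (simp add: comp_def case_prod_beta)
  have upd_space: "x(i:=y) \<in> space (PiM (insert i I) (\<lambda>_. \<mu>))" if "x \<in> space (PiM I (\<lambda>_. \<mu>))" "y \<in> space \<mu>" for x y
    using that by (auto simp: space_PiM PiE_def extensional_def Pi_def)
  have fxm: "(\<lambda>y. f (x(i:=y))) \<in> borel_measurable \<mu>" if "x \<in> space (PiM I (\<lambda>_. \<mu>))" for x
    using measurable_Pair2[OF fm2 that] by simp
  define f1 where "f1 x = (\<integral>y. f (x(i:=y)) \<partial>\<mu>)" for x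
  have f1m[measurable]: "f1 \<in> borel_measurable (PiM I (\<lambda>_. \<mu>))"
    unfolding f1_def by (rule sigma_finite_measure.borel_measurable_lebesgue_integral[OF prob_space_imp_sigma_finite[OF P]]) (use fm2 in simp)
  have fint: "integrable (PiM (insert i I) (\<lambda>_. \<mu>)) f"
    by (rule PII.integrable_const_bound[where B=B]) (use insert.prems(2) in auto)
  have Ef: "(\<integral>x. f x \<partial>PiM (insert i I) (\<lambda>_. \<mu>)) = (\<integral>x. f1 x \<partial>PiM I (\<lambda>_. \<mu>))"
    unfolding f1_def by (rule PS.product_integral_insert[OF insert.hyps fint])
  define E where "E = (\<integral>x. f1 x \<partial>PiM I (\<lambda>_. \<mu>))"
  have f1B: "\<bar>f1 x\<bar> \<le> B" if "x \<in> space (PiM I (\<lambda>_. \<mu>))" for x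
  proof -
    have "\<bar>f1 x\<bar> \<le> (\<integral>y. \<bar>f (x(i:=y))\<bar> \<partial>\<mu>)" unfolding f1_def by (rule integral_abs_bound)
    also have "\<dots> \<le> (\<integral>y. B \<partial>\<mu>)"
      by (rule integral_mono) (auto intro!: \<mu>.integrable_const_bound[where B=B] insert.prems(2) upd_space that
          borel_measurable_abs fxm simp del: fun_upd_apply)
    finally show ?thesis by (simp add: \<mu>.prob_space)
  qed
  have fxi: "integrable \<mu> (\<lambda>y. f (x(i:=y)))" if "x \<in> space (PiM I (\<lambda>_. \<mu>))" for x
    by (rule \<mu>.integrable_const_bound[where B=B]) (auto intro!: insert.prems(2) upd_space that fxm simp del: fun_upd_apply)
  have f1d: "\<bar>f1 (x(j:=y)) - f1 x\<bar> \<le> c" if j: "j \<in> I" and x: "x \<in> space (PiM I (\<lambda>_. \<mu>))" and y: "y \<in> space \<mu>" for j x y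
  proof -
    have ij: "i \<noteq> j" using j insert.hyps by auto
    have xj: "x(j:=y) \<in> space (PiM I (\<lambda>_. \<mu>))" using x y j by (auto simp: space_PiM PiE_def extensional_def Pi_def)
    have "f1 (x(j:=y)) - f1 x = (\<integral>yy. f (x(j:=y, i:=yy)) - f (x(i:=yy)) \<partial>\<mu>)"
      unfolding f1_def by (rule Bochner_Integration.integral_diff[symmetric]) (auto intro!: fxi xj x)
    also have "\<bar>\<dots>\<bar> \<le> (\<integral>yy. \<bar>f (x(j:=y, i:=yy)) - f (x(i:=yy))\<bar> \<partial>\<mu>)" by (rule integral_abs_bound)
    also have "\<dots> \<le> (\<integral>yy. c \<partial>\<mu>)"
    proof (rule integral_mono)
      show "integrable \<mu> (\<lambda>yy. \<bar>f (x(j:=y, i:=yy)) - f (x(i:=yy))\<bar>)"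
        by (intro integrable_abs Bochner_Integration.integrable_diff fxi xj x)
      fix yy assume yy: "yy \<in> space \<mu>"
      have "x(j:=y, i:=yy) = (x(i:=yy))(j:=y)" using ij by (simp add: fun_upd_twist)
      moreover have "\<bar>f ((x(i:=yy))(j:=y)) - f (x(i:=yy))\<bar> \<le> c"
        using insert.prems(3)[of j "x(i:=yy)" y] j y upd_space[OF x yy] by blast
      ultimately show "\<bar>f (x(j:=y, i:=yy)) - f (x(i:=yy))\<bar> \<le> c" by metis
    qed simp
    finally show ?thesis by (simp add: \<mu>.prob_space)
  qed
  have IH: "(\<integral>\<^sup>+x. ennreal (exp (l * (f1 x - E))) \<partial>PiM I (\<lambda>_. \<mu>)) \<le> ennreal (exp (l\<^sup>2 * (real (card I) * c\<^sup>2) / 8))"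
    unfolding E_def by (rule insert.IH[OF f1m f1B f1d]) auto
  have inner: "(\<integral>\<^sup>+y. ennreal (exp (l * (f (x(i:=y)) - f1 x))) \<partial>\<mu>) \<le> ennreal (exp (l\<^sup>2 * c\<^sup>2 / 8))"
    if x: "x \<in> space (PiM I (\<lambda>_. \<mu>))" for x
  proof -
    define v where "v y = f (x(i:=y))" for y
    define a where "a = (INF y\<in>space \<mu>. v y)"
    have ne: "space \<mu> \<noteq> {}" by (rule \<mu>.not_empty)
    have vB: "\<bar>v y\<bar> \<le> B" if "y \<in> space \<mu>" for y
      unfolding v_def by (intro insert.prems(2) upd_space x that)
    have bdd: "bdd_below (v ` space \<mu>)" using vB by (intro bdd_belowI[of _ "-B"]) force
    have vd: "v y - v yy \<le> c" if "y \<in> space \<mu>" "yy \<in> space \<mu>" for y yy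
    proof -
      have "\<bar>f ((x(i:=yy))(i:=y)) - f (x(i:=yy))\<bar> \<le> c"
        using insert.prems(3)[of i "x(i:=yy)" y] upd_space[OF x that(2)] that by blast
      then show ?thesis unfolding v_def by simp
    qed
    have "v y \<in> {a..a+c}" if y: "y \<in> space \<mu>" for y
    proof -
      have "a \<le> v y" unfolding a_def by (rule cINF_lower[OF bdd y])
      moreover have "v y - c \<le> a" unfolding a_def
        by (rule cINF_greatest[OF ne]) (use vd y in force)
      ultimately show ?thesis by simp
    qed
    then have "AE y in \<mu>. v y \<in> {a..a+c}" by (intro AE_I2) blast
    moreover have "v \<in> borel_measurable \<mu>" unfolding v_def by (rule fxm[OF x])
    ultimately interpret V: interval_bounded_random_variable \<mu> v a "a+c"
      unfolding interval_bounded_random_variable_def interval_bounded_random_variable_axioms_def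
      using P by blast
    have "nn_integral \<mu> (\<lambda>y. ennreal (exp (l * (v y - \<mu>.expectation v)))) \<le> ennreal (exp (l\<^sup>2 * (a + c - a)\<^sup>2 / 8))"
      by (rule V.Hoeffdings_lemma_nn_integral[OF l])
    moreover have "\<mu>.expectation v = f1 x" by (simp add: f1_def v_def[abs_def])
    ultimately show ?thesis by (simp add: v_def[abs_def])
  qed
  have "(\<integral>\<^sup>+x. ennreal (exp (l * (f x - (\<integral>x. f x \<partial>PiM (insert i I) (\<lambda>_. \<mu>))))) \<partial>PiM (insert i I) (\<lambda>_. \<mu>))
     = (\<integral>\<^sup>+x. (\<integral>\<^sup>+y. ennreal (exp (l * (f (x(i:=y)) - E))) \<partial>\<mu>) \<partial>PiM I (\<lambda>_. \<mu>))"
    unfolding Ef E_def[symmetric] by (rule PS.product_nn_integral_insert[OF insert.hyps]) measurable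
  also have "\<dots> = (\<integral>\<^sup>+x. ennreal (exp (l * (f1 x - E))) * (\<integral>\<^sup>+y. ennreal (exp (l * (f (x(i:=y)) - f1 x))) \<partial>\<mu>) \<partial>PiM I (\<lambda>_. \<mu>))"
  proof (intro nn_integral_cong)
    fix x assume "x \<in> space (PiM I (\<lambda>_. \<mu>))"
    have "(\<integral>\<^sup>+y. ennreal (exp (l * (f (x(i:=y)) - E))) \<partial>\<mu>) = 
          (\<integral>\<^sup>+y. ennreal (exp (l * (f1 x - E))) * ennreal (exp (l * (f (x(i:=y)) - f1 x))) \<partial>\<mu>)"
      by (intro nn_integral_cong) (simp add: ennreal_mult[symmetric] exp_add[symmetric] algebra_simps)
    also have "\<dots> = ennreal (exp (l * (f1 x - E))) * (\<integral>\<^sup>+y. ennreal (exp (l * (f (x(i:=y)) - f1 x))) \<partial>\<mu>)"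
      by (rule nn_integral_cmult) (use \<open>x \<in> _\<close> in measurable)
    finally show "(\<integral>\<^sup>+y. ennreal (exp (l * (f (x(i:=y)) - E))) \<partial>\<mu>) = \<dots>" .
  qed
  also have "\<dots> \<le> (\<integral>\<^sup>+x. ennreal (exp (l * (f1 x - E))) * ennreal (exp (l\<^sup>2 * c\<^sup>2 / 8)) \<partial>PiM I (\<lambda>_. \<mu>))"
    by (intro nn_integral_mono mult_left_mono inner) auto
  also have "\<dots> = (\<integral>\<^sup>+x. ennreal (exp (l * (f1 x - E))) \<partial>PiM I (\<lambda>_. \<mu>)) * ennreal (exp (l\<^sup>2 * c\<^sup>2 / 8))"
    by (rule nn_integral_multc) measurable
  also have "\<dots> \<le> ennreal (exp (l\<^sup>2 * (real (card I) * c\<^sup>2) / 8)) * ennreal (exp (l\<^sup>2 * c\<^sup>2 / 8))"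
    by (intro mult_right_mono IH) auto
  also have "\<dots> = ennreal (exp (l\<^sup>2 * (real (card (insert i I)) * c\<^sup>2) / 8))"
    using insert.hyps by (simp add: ennreal_mult[symmetric] exp_add[symmetric] algebra_simps add_divide_distrib)
  finally show ?case .
qed

lemma mcdiarmid:
  fixes \<mu> :: "'a measure" and c s B :: real and I :: "'i set"
  assumes P: "prob_space \<mu>" and fin: "finite I" and ne: "I \<noteq> {}" and c: "c > 0" and s: "s > 0"
    and fm: "f \<in> borel_measurable (PiM I (\<lambda>_. \<mu>))"
    and fB: "\<And>x. x \<in> space (PiM I (\<lambda>_. \<mu>)) \<Longrightarrow> \<bar>f x\<bar> \<le> B"
    and fd: "\<And>i x y. i \<in> I \<Longrightarrow> x \<in> space (PiM I (\<lambda>_. \<mu>)) \<Longrightarrow> y \<in> space \<mu> \<Longrightarrow> \<bar>f (x(i:=y)) - f x\<bar> \<le> c"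
  shows "measure (PiM I (\<lambda>_. \<mu>)) {x\<in>space (PiM I (\<lambda>_. \<mu>)). f x \<ge> (\<integral>x. f x \<partial>PiM I (\<lambda>_. \<mu>)) + s}
           \<le> exp (-2 * s\<^sup>2 / (real (card I) * c\<^sup>2))"
proof -
  let ?P = "PiM I (\<lambda>_. \<mu>)"
  interpret PP: prob_space ?P by (rule prob_space_PiM) (use P in auto)
  define E where "E = (\<integral>x. f x \<partial>?P)"
  define d where "d = real (card I) * c\<^sup>2"
  have d: "d > 0" using fin ne c by (simp add: d_def card_gt_0_iff)
  define l where "l = 4 * s / d"
  have l: "l > 0" using s d by (simp add: l_def)
  have "{x\<in>space ?P. f x \<ge> E + s} = {x\<in>space ?P. f x - E \<ge> s}" by auto
  then have "ennreal (measure ?P {x\<in>space ?P. f x \<ge> E + s}) = emeasure ?P {x\<in>space ?P. f x - E \<ge> s}"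
    by (simp add: PP.emeasure_eq_measure)
  also have "\<dots> \<le> ennreal (exp (-l * s)) * (\<integral>\<^sup>+x. ennreal (exp (l * (f x - E))) * indicator (space ?P) x \<partial>?P)"
    by (intro Chernoff_ineq_nn_integral_ge l) (use fm in auto)
  also have "(\<integral>\<^sup>+x. ennreal (exp (l * (f x - E))) * indicator (space ?P) x \<partial>?P) = (\<integral>\<^sup>+x. ennreal (exp (l * (f x - E))) \<partial>?P)"
    by (intro nn_integral_cong) auto
  also have "ennreal (exp (-l * s)) * (\<integral>\<^sup>+x. ennreal (exp (l * (f x - E))) \<partial>?P) \<le> ennreal (exp (-l * s)) * ennreal (exp (l\<^sup>2 * d / 8))"
    unfolding E_def d_def by (intro mult_left_mono mcd_mgf[OF P fin l fm fB fd]) auto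
  also have "ennreal (exp (-l * s)) * ennreal (exp (l\<^sup>2 * d / 8)) = ennreal (exp (d * l\<^sup>2 / 8 - l * s))"
    by (simp add: ennreal_mult[symmetric] exp_add[symmetric] algebra_simps)
  also have "d * l\<^sup>2 / 8 - l * s = -2 * s\<^sup>2 / d"
    using d by (simp add: l_def field_simps power2_eq_square)
  finally show ?thesis
    by (subst (asm) ennreal_le_iff) (simp_all add: E_def d_def)
qed

lemma key2:
  fixes A t :: "'v \<Rightarrow> real" and \<phi> :: "real \<Rightarrow> real"
  assumes T: "T \<noteq> {}" and lip: "\<And>a b. \<bar>\<phi> a - \<phi> b\<bar> \<le> \<bar>a - b\<bar>"
    and b1: "bdd_above ((\<lambda>v. A v + t v) ` T)" and b2: "bdd_above ((\<lambda>v. A v - t v) ` T)"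
  shows "(SUP v\<in>T. A v + \<phi> (t v)) + (SUP v\<in>T. A v - \<phi> (t v)) \<le> (SUP v\<in>T. A v + t v) + (SUP v\<in>T. A v - t v)"
proof -
  define S where "S = (SUP v\<in>T. A v + t v) + (SUP v\<in>T. A v - t v)"
  have main: "A v + \<phi> (t v) + (A v' - \<phi> (t v')) \<le> S" if "v \<in> T" "v' \<in> T" for v v'
  proof -
    have l: "\<phi> (t v) - \<phi> (t v') \<le> \<bar>t v - t v'\<bar>" using lip[of "t v" "t v'"] by linarith
    have u1: "A v + t v \<le> (SUP v\<in>T. A v + t v)" "A v' + t v' \<le> (SUP v\<in>T. A v + t v)"
      using that b1 by (auto intro: cSUP_upper)
    have u2: "A v - t v \<le> (SUP v\<in>T. A v - t v)" "A v' - t v' \<le> (SUP v\<in>T. A v - t v)"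
      using that b2 by (auto intro: cSUP_upper)
    show ?thesis using l u1 u2 unfolding S_def by (cases "t v \<ge> t v'") (auto simp: abs_if)
  qed
  have "A v' - \<phi> (t v') \<le> S - (SUP v\<in>T. A v + \<phi> (t v))" if "v' \<in> T" for v'
  proof -
    have "(SUP v\<in>T. A v + \<phi> (t v)) \<le> S - (A v' - \<phi> (t v'))"
      by (rule cSUP_least[OF T]) (use main that in force)
    then show ?thesis by linarith
  qed
  then have "(SUP v\<in>T. A v - \<phi> (t v)) \<le> S - (SUP v\<in>T. A v + \<phi> (t v))"
    by (intro cSUP_least[OF T]) auto
  then show ?thesis unfolding S_def by linarith
qed

definition signs :: "'k set \<Rightarrow> ('k \<Rightarrow> real) set" where
  "signs I = PiE I (\<lambda>_. {-1, 1})"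

lemma finite_signs: "finite I \<Longrightarrow> finite (signs I)"
  unfolding signs_def by (intro finite_PiE) auto

lemma signs_ne: "signs I \<noteq> {}"
  unfolding signs_def by (simp add: PiE_eq_empty_iff)

lemma contraction:
  fixes t :: "'k \<Rightarrow> 'v \<Rightarrow> real" and \<phi> :: "real \<Rightarrow> real"
  assumes fin: "finite I" and T: "T \<noteq> {}" and lip: "\<And>a b. \<bar>\<phi> a - \<phi> b\<bar> \<le> \<bar>a - b\<bar>" and phi0: "\<phi> 0 = 0"
    and bdd: "\<And>e. e \<in> signs I \<Longrightarrow> bdd_above ((\<lambda>v. \<Sum>k\<in>I. e k * t k v) ` T)"
  shows "(\<Sum>e\<in>signs I. SUP v\<in>T. \<Sum>k\<in>I. e k * \<phi> (t k v)) \<le> (\<Sum>e\<in>signs I. SUP v\<in>T. \<Sum>k\<in>I. e k * t k v)"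
proof -
  define \<psi> where "\<psi> J k v = (if k \<in> J then \<phi> (t k v) else t k v)" for J k v
  define L where "L J = (\<Sum>e\<in>signs I. SUP v\<in>T. \<Sum>k\<in>I. e k * \<psi> J k v)" for J
  define Mx where "Mx = Max ((\<lambda>e. SUP v\<in>T. \<Sum>k\<in>I. e k * t k v) ` signs I)"
  have phib: "\<bar>\<phi> s\<bar> \<le> \<bar>s\<bar>" for s using lip[of s 0] phi0 by simp
  have absb: "(\<Sum>k\<in>I. \<bar>t k v\<bar>) \<le> Mx" if v: "v \<in> T" for v
  proof -
    define e where "e = (\<lambda>k\<in>I. if t k v \<ge> 0 then 1 else (-1::real))"
    have e: "e \<in> signs I" unfolding e_def signs_def by auto
    have "(\<Sum>k\<in>I. \<bar>t k v\<bar>) = (\<Sum>k\<in>I. e k * t k v)" by (intro sum.cong) (auto simp: e_def)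
    also have "\<dots> \<le> (SUP v\<in>T. \<Sum>k\<in>I. e k * t k v)" by (rule cSUP_upper[OF v bdd[OF e]])
    also have "\<dots> \<le> Mx" unfolding Mx_def using e by (intro Max_ge finite_imageI finite_signs fin) auto
    finally show ?thesis .
  qed
  have psib: "(\<Sum>k\<in>I. e k * \<psi> J k v) \<le> Mx" if "e \<in> signs I" "v \<in> T" for e J v
  proof -
    have "(\<Sum>k\<in>I. e k * \<psi> J k v) \<le> (\<Sum>k\<in>I. \<bar>t k v\<bar>)"
    proof (rule sum_mono)
      fix k assume k: "k \<in> I"
      have "e k \<in> {-1, 1}" using that k unfolding signs_def by blast
      then have ek: "\<bar>e k\<bar> = 1" by auto
      have "e k * \<psi> J k v \<le> \<bar>e k\<bar> * \<bar>\<psi> J k v\<bar>" by (simp add: abs_mult[symmetric])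
      also have "\<dots> \<le> \<bar>t k v\<bar>" using ek phib by (simp add: \<psi>_def)
      finally show "e k * \<psi> J k v \<le> \<bar>t k v\<bar>" .
    qed
    also have "\<dots> \<le> Mx" by (rule absb[OF that(2)])
    finally show ?thesis .
  qed
  have bddJ: "bdd_above ((\<lambda>v. \<Sum>k\<in>I. e k * \<psi> J k v) ` T)" if "e \<in> signs I" for e J
    using psib[OF that] by (intro bdd_aboveI[of _ Mx]) auto
  have step: "L (insert j J) \<le> L J" if j: "j \<in> I" "j \<notin> J" for j J
  proof -
    define fl where "fl e = e(j := - e j)" for e :: "'k \<Rightarrow> real"
    have fls: "fl e \<in> signs I" if "e \<in> signs I" for e
      using that j unfolding signs_def fl_def by (auto simp: PiE_iff extensional_def)
    have flfl: "fl (fl e) = e" for e unfolding fl_def by auto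
    have swap: "(\<Sum>e\<in>signs I. F e) = (\<Sum>e\<in>signs I. F (fl e))" for F :: "('k \<Rightarrow> real) \<Rightarrow> real"
      by (rule sum.reindex_bij_witness[of _ fl fl]) (auto simp: flfl fls)
    define F where "F J' e = (SUP v\<in>T. \<Sum>k\<in>I. e k * \<psi> J' k v)" for J' e
    have pw: "F (insert j J) e + F (insert j J) (fl e) \<le> F J e + F J (fl e)" if e: "e \<in> signs I" for e
    proof -
      define A where "A v = (\<Sum>k\<in>I-{j}. e k * \<psi> J k v)" for v
      have ej: "e j \<in> {-1, 1}" using e j unfolding signs_def by blast
      have A': "(\<Sum>k\<in>I-{j}. e k * \<psi> (insert j J) k v) = A v" for v
        unfolding A_def by (intro sum.cong) (auto simp: \<psi>_def)
      have Afl: "(\<Sum>k\<in>I-{j}. fl e k * \<psi> J' k v) = (\<Sum>k\<in>I-{j}. e k * \<psi> J' k v)" for v J'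
        by (intro sum.cong) (auto simp: fl_def)
      have s1: "(\<Sum>k\<in>I. e k * \<psi> (insert j J) k v) = A v + e j * \<phi> (t j v)" for v
        using A'[of v] by (simp add: sum.remove[OF fin j(1)] \<psi>_def)
      have s2: "(\<Sum>k\<in>I. fl e k * \<psi> (insert j J) k v) = A v - e j * \<phi> (t j v)" for v
        using A'[of v] Afl[of "insert j J" v] by (simp add: sum.remove[OF fin j(1)] \<psi>_def fl_def)
      have s3: "(\<Sum>k\<in>I. e k * \<psi> J k v) = A v + e j * t j v" for v
        using j by (simp add: sum.remove[OF fin j(1)] \<psi>_def A_def)
      have s4: "(\<Sum>k\<in>I. fl e k * \<psi> J k v) = A v - e j * t j v" for v
        using j Afl[of J v] by (simp add: sum.remove[OF fin j(1)] \<psi>_def A_def fl_def)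
      have b3: "bdd_above ((\<lambda>v. A v + e j * t j v) ` T)" using bddJ[OF e, of J] by (simp add: s3)
      have b4: "bdd_above ((\<lambda>v. A v - e j * t j v) ` T)" using bddJ[OF fls[OF e], of J] by (simp add: s4)
      have F1: "F (insert j J) e = (SUP v\<in>T. A v + e j * \<phi> (t j v))" unfolding F_def by (simp add: s1)
      have F2: "F (insert j J) (fl e) = (SUP v\<in>T. A v - e j * \<phi> (t j v))" unfolding F_def by (simp add: s2)
      have F3: "F J e = (SUP v\<in>T. A v + e j * t j v)" unfolding F_def by (simp add: s3)
      have F4: "F J (fl e) = (SUP v\<in>T. A v - e j * t j v)" unfolding F_def by (simp add: s4)
      show ?thesis
      proof (cases "e j = 1")
        case True
        then show ?thesis unfolding F1 F2 F3 F4 using key2[OF T lip, of A "t j"] b3 b4 by simp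
      next
        case False
        then have "e j = -1" using ej by auto
        then show ?thesis unfolding F1 F2 F3 F4 using key2[OF T lip, of A "t j"] b3 b4 by simp
      qed
    qed
    have LF: "L J' = (\<Sum>e\<in>signs I. F J' e)" for J' unfolding L_def F_def ..
    have sw1: "(\<Sum>e\<in>signs I. F J' (fl e)) = L J'" for J' using swap[of "F J'"] LF by simp
    have tw: "2 * L J' = (\<Sum>e\<in>signs I. F J' e + F J' (fl e))" for J'
      by (simp add: sum.distrib sw1 LF[symmetric])
    have "2 * L (insert j J) \<le> 2 * L J" unfolding tw by (intro sum_mono pw)
    then show ?thesis by simp
  qed
  have "L J \<le> L {}" if "J \<subseteq> I" for J
  proof -
    have "finite J" using that fin finite_subset by blast
    then show ?thesis using that
    proof (induction J rule: finite_induct)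
      case (insert j J)
      then show ?case using step[of j J] by force
    qed simp
  qed
  from this[OF order_refl] show ?thesis unfolding L_def \<psi>_def by simp
qed

lemma G_cont:
  fixes \<mu> :: "(real^'n) measure" and xi :: real
  assumes P: "prob_space \<mu>" and s: "sets \<mu> = sets borel" and xi: "xi > 0"
  shows "continuous_on UNIV (\<lambda>v. \<integral>y. min \<bar>y \<bullet> v\<bar> xi \<partial>\<mu>)"
proof (rule continuous_on_sequentiallyI)
  interpret prob_space \<mu> by (rule P)
  fix u :: "nat \<Rightarrow> real^'n" and v assume "u \<longlonglongrightarrow> v"
  show "(\<lambda>n. \<integral>y. min \<bar>y \<bullet> u n\<bar> xi \<partial>\<mu>) \<longlonglongrightarrow> (\<integral>y. min \<bar>y \<bullet> v\<bar> xi \<partial>\<mu>)"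
  proof (rule integral_dominated_convergence[where w="\<lambda>_. xi"])
    show "(\<lambda>y. min \<bar>y \<bullet> v\<bar> xi) \<in> borel_measurable \<mu>" using s by (simp add: measurable_cong_sets[OF s refl])
    show "(\<lambda>y. min \<bar>y \<bullet> u n\<bar> xi) \<in> borel_measurable \<mu>" for n by (simp add: measurable_cong_sets[OF s refl])
    show "integrable \<mu> (\<lambda>_. xi)" by simp
    show "AE y in \<mu>. (\<lambda>n. min \<bar>y \<bullet> u n\<bar> xi) \<longlonglongrightarrow> min \<bar>y \<bullet> v\<bar> xi"
      using \<open>u \<longlonglongrightarrow> v\<close> by (intro AE_I2 tendsto_intros)
    show "AE y in \<mu>. norm (min \<bar>y \<bullet> u n\<bar> xi) \<le> xi" for n using xi by (intro AE_I2) auto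
  qed
qed

lemma le_SUP_closure:
  fixes f :: "'a::metric_space \<Rightarrow> real"
  assumes c: "continuous_on UNIV f" and D: "D \<subseteq> E" "E \<subseteq> closure D" "D \<noteq> {}"
    and b: "bdd_above (f ` D)" and v: "v \<in> E"
  shows "f v \<le> (SUP d\<in>D. f d)"
proof -
  have "f ` closure D \<subseteq> {..(SUP d\<in>D. f d)}"
    by (rule image_closure_subset) (use c b in \<open>auto intro: continuous_on_subset cSUP_upper\<close>)
  then show ?thesis using v D by auto
qed

lemma SUP_le_SUP_plus:
  fixes f g :: "'a \<Rightarrow> real"
  assumes "D \<noteq> {}" "bdd_above (g ` D)" "\<And>v. v \<in> D \<Longrightarrow> f v \<le> g v + c"
  shows "(SUP v\<in>D. f v) \<le> (SUP v\<in>D. g v) + c"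
proof -
  have "f v \<le> (SUP v\<in>D. g v) + c" if "v \<in> D" for v
    using assms(3)[OF that] cSUP_upper[OF that assms(2)] by linarith
  then show ?thesis by (intro cSUP_least assms(1)) auto
qed

lemma sum_pairs:
  fixes q :: "nat \<Rightarrow> real"
  shows "(\<Sum>i\<in>{1..2*p}. q i) = (\<Sum>k\<in>{1..p}. q (2*k-1) + q (2*k))"
proof (induction p)
  case (Suc p)
  have "{1..2 * Suc p} = insert (2*p+2) (insert (2*p+1) {1..2*p})" by auto
  then have "(\<Sum>i\<in>{1..2*Suc p}. q i) = q (2*p+2) + q (2*p+1) + (\<Sum>i\<in>{1..2*p}. q i)" by simp
  then show ?case using Suc by simp
qed simp

lemma half_sq_diff: "(x - y)\<^sup>2 / 2 \<le> x\<^sup>2 + (y::real)\<^sup>2"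
proof -
  have "0 \<le> (x + y)\<^sup>2" by simp
  then have "0 \<le> x*x + 2*x*y + y*y" by (simp add: power2_eq_square algebra_simps)
  then show ?thesis by (simp add: power2_eq_square field_simps)
qed

lemma anorm_lower:
  fixes a :: "nat \<Rightarrow> 'w \<Rightarrow> real^'n"
  assumes p: "p \<ge> 1" "2 * p \<le> m"
  shows "Anorm m a w v \<ge> (1 / sqrt (real p)) * (\<Sum>k\<in>{1..p}. \<bar>brow a k w \<bullet> v\<bar>)"
proof -
  define q where "q i = (a i w \<bullet> v)\<^sup>2" for i
  have "(\<Sum>k\<in>{1..p}. (brow a k w \<bullet> v)\<^sup>2) \<le> (\<Sum>k\<in>{1..p}. q (2*k-1) + q (2*k))"
  proof (rule sum_mono)
    fix k
    have "(brow a k w \<bullet> v)\<^sup>2 = (a (2*k-1) w \<bullet> v - a (2*k) w \<bullet> v)\<^sup>2 / 2"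
      by (simp add: brow_def inner_diff_left power_divide power_mult_distrib)
    also have "\<dots> \<le> q (2*k-1) + q (2*k)"
      unfolding q_def by (rule half_sq_diff)
    finally show "(brow a k w \<bullet> v)\<^sup>2 \<le> q (2*k-1) + q (2*k)" .
  qed
  also have "\<dots> = (\<Sum>i\<in>{1..2*p}. q i)" by (rule sum_pairs[symmetric])
  also have "\<dots> \<le> (\<Sum>i\<in>{1..m}. q i)" using p by (intro sum_mono2) (auto simp: q_def)
  finally have 1: "(\<Sum>k\<in>{1..p}. (brow a k w \<bullet> v)\<^sup>2) \<le> (\<Sum>i\<in>{1..m}. q i)" .
  have 2: "(\<Sum>k\<in>{1..p}. \<bar>brow a k w \<bullet> v\<bar>)\<^sup>2 \<le> (\<Sum>k\<in>{1..p}. (brow a k w \<bullet> v)\<^sup>2) * real p"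
    using sum_squared_le_sum_of_squares[of "\<lambda>k. \<bar>brow a k w \<bullet> v\<bar>" "{1..p}"] by simp
  have "(\<Sum>k\<in>{1..p}. \<bar>brow a k w \<bullet> v\<bar>) \<le> sqrt ((\<Sum>k\<in>{1..p}. (brow a k w \<bullet> v)\<^sup>2) * real p)"
    using 2 by (intro real_le_rsqrt) simp
  also have "\<dots> \<le> sqrt ((\<Sum>i\<in>{1..m}. q i) * real p)" using 1 by (intro real_sqrt_le_mono mult_right_mono) auto
  also have "\<dots> = Anorm m a w v * sqrt (real p)" by (simp add: Anorm_def q_def real_sqrt_mult)
  finally show ?thesis using p by (simp add: field_simps)
qed

lemma brow_measurable[measurable]:
  assumes "a (2*k-1) \<in> borel_measurable M" "a (2*k) \<in> borel_measurable M"
  shows "brow a k \<in> borel_measurable M"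
  using assms unfolding brow_def[abs_def] by measurable

lemma indep_brow:
  fixes a :: "nat \<Rightarrow> 'w \<Rightarrow> real^'n"
  assumes P: "prob_space M" and p: "2 * p \<le> m"
    and am: "\<And>i. i \<in> {1..m} \<Longrightarrow> a i \<in> borel_measurable M"
    and ind: "prob_space.indep_vars M (\<lambda>_. borel) a {1..m}"
  shows "prob_space.indep_vars M (\<lambda>_. borel) (brow a) {1..p}"
proof -
  interpret prob_space M by (rule P)
  define Ej where "Ej i = {a i -` A \<inter> space M | A. A \<in> sets (borel :: (real^'n) measure)}" for i
  define IJ where "IJ j = {2*j-1, 2*j}" for j :: nat
  have ind1: "indep_sets Ej {1..m}" using ind unfolding indep_vars_def2 Ej_def by blast
  have sub: "(\<Union>j\<in>{1..p}. IJ j) \<subseteq> {1..m}" using p by (auto simp: IJ_def)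
  have col: "indep_sets (\<lambda>j. sigma_sets (space M) (\<Union>i\<in>IJ j. Ej i)) {1..p}"
  proof (rule indep_sets_collect_sigma)
    show "indep_sets Ej (\<Union>j\<in>{1..p}. IJ j)" by (rule indep_sets_mono_index[OF sub ind1])
    show "Int_stable (Ej i)" for i
      unfolding Int_stable_def Ej_def
    proof safe
      fix A B :: "(real^'n) set" assume "A \<in> sets borel" "B \<in> sets borel"
      then show "\<exists>C. a i -` A \<inter> space M \<inter> (a i -` B \<inter> space M) = a i -` C \<inter> space M \<and> C \<in> sets borel"
        by (intro exI[of _ "A \<inter> B"]) auto
    qed
    show "disjoint_family_on IJ {1..p}"
      unfolding disjoint_family_on_def IJ_def by auto
  qed
  moreover have sj: "{brow a j -` A \<inter> space M | A. A \<in> sets (borel :: (real^'n) measure)} \<subseteq> sigma_sets (space M) (\<Union>i\<in>IJ j. Ej i)"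
    if j: "j \<in> {1..p}" for j
  proof -
    define \<Sigma> where "\<Sigma> = sigma (space M) (\<Union>i\<in>IJ j. Ej i)"
    have pow: "(\<Union>i\<in>IJ j. Ej i) \<subseteq> Pow (space M)" by (auto simp: Ej_def)
    have sp: "space \<Sigma> = space M" unfolding \<Sigma>_def using pow by (rule space_measure_of)
    have ss: "sets \<Sigma> = sigma_sets (space M) (\<Union>i\<in>IJ j. Ej i)" unfolding \<Sigma>_def using pow by (rule sets_measure_of)
    have ai: "a i \<in> borel_measurable \<Sigma>" if i: "i \<in> IJ j" for i
    proof (rule measurableI)
      fix A :: "(real^'n) set" assume "A \<in> sets borel"
      then have "a i -` A \<inter> space M \<in> (\<Union>i\<in>IJ j. Ej i)" using i by (auto simp: Ej_def)
      then show "a i -` A \<inter> space \<Sigma> \<in> sets \<Sigma>" unfolding sp ss by auto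
    qed auto
    have "brow a j \<in> borel_measurable \<Sigma>"
      by (rule brow_measurable) (intro ai, simp add: IJ_def)+
    then have "brow a j -` A \<inter> space M \<in> sets \<Sigma>" if "A \<in> sets borel" for A
      using that measurable_sets[of "brow a j" \<Sigma> borel A] sp by simp
    then show ?thesis unfolding ss by blast
  qed
  moreover have rv: "random_variable borel (brow a j)" if "j \<in> {1..p}" for j
    using that p by (intro brow_measurable am) auto
  have "indep_sets (\<lambda>j. {brow a j -` A \<inter> space M | A. A \<in> sets (borel :: (real^'n) measure)}) {1..p}"
    by (rule indep_sets_mono_sets[OF col sj])
  then show ?thesis unfolding indep_vars_def2 using rv by blast
qed

lemma distr_Avec:
  fixes a :: "nat \<Rightarrow> 'w \<Rightarrow> real^'n"
  assumes P: "prob_space M" and m: "m \<ge> 1"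
    and am: "\<And>i. i \<in> {1..m} \<Longrightarrow> a i \<in> borel_measurable M"
    and ind: "prob_space.indep_vars M (\<lambda>_. borel) a {1..m}"
    and id: "\<And>i. i \<in> {1..m} \<Longrightarrow> distr M borel (a i) = distr M borel (a 1)"
  shows "distr M (PiM {1..m} (\<lambda>_. borel)) (\<lambda>w. \<lambda>i\<in>{1..m}. a i w) = PiM {1..m} (\<lambda>_. distr M borel (a 1))"
proof -
  interpret prob_space M by (rule P)
  have "distr M (PiM {1..m} (\<lambda>_. borel)) (\<lambda>w. \<lambda>i\<in>{1..m}. a i w) = PiM {1..m} (\<lambda>i. distr M borel (a i))"
    using indep_vars_iff_distr_eq_PiM'[where I="{1..m}" and M'="\<lambda>_. borel" and X=a] m am ind by auto
  also have "\<dots> = PiM {1..m} (\<lambda>_. distr M borel (a 1))" by (intro PiM_cong refl id)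
  finally show ?thesis .
qed

lemma brow_distr:
  fixes a :: "nat \<Rightarrow> 'w \<Rightarrow> real^'n"
  assumes P: "prob_space M" and m: "m \<ge> 2"
    and am: "\<And>i. i \<in> {1..m} \<Longrightarrow> a i \<in> borel_measurable M"
    and ind: "prob_space.indep_vars M (\<lambda>_. borel) a {1..m}"
    and id: "\<And>i. i \<in> {1..m} \<Longrightarrow> distr M borel (a i) = distr M borel (a 1)"
    and k: "k \<in> {1..m div 2}"
  shows "distr M borel (brow a k) = distr M borel (brow a 1)"
proof -
  interpret prob_space M by (rule P)
  define \<mu>a where "\<mu>a = distr M borel (a 1)"
  define PA where "PA = PiM {1..m} (\<lambda>_. \<mu>a)"
  define Av where "Av w = (\<lambda>i\<in>{1..m}. a i w)" for w
  define T where "T k y = (1 / sqrt 2) *\<^sub>R (y (2*k-1) - y (2*k))" for k and y :: "nat \<Rightarrow> real^'n"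
  have dA: "distr M PA Av = PA"
  proof -
    have "distr M PA Av = distr M (PiM {1..m} (\<lambda>_. borel)) Av"
      unfolding PA_def \<mu>a_def by (intro distr_cong refl sets_PiM_cong) auto
    also have "\<dots> = PA" unfolding Av_def PA_def \<mu>a_def using m by (intro distr_Avec[OF P _ am ind id]) auto
    finally show ?thesis .
  qed
  have sPA: "sets PA = sets (PiM {1..m} (\<lambda>_. borel :: (real^'n) measure))"
    unfolding PA_def \<mu>a_def by (intro sets_PiM_cong) auto
  have Avm: "Av \<in> measurable M PA"
    unfolding Av_def measurable_cong_sets[OF refl sPA] using am by measurable
  have Tm: "T j \<in> borel_measurable PA" if "j \<in> {1..m div 2}" for j
  proof -
    have c1[measurable]: "(\<lambda>x. x (2*j-1)) \<in> measurable (PiM {1..m} (\<lambda>_. borel :: (real^'n) measure)) borel"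
      by (rule measurable_component_singleton) (use that in auto)
    have c2[measurable]: "(\<lambda>x. x (2*j)) \<in> measurable (PiM {1..m} (\<lambda>_. borel :: (real^'n) measure)) borel"
      by (rule measurable_component_singleton) (use that in auto)
    show ?thesis unfolding measurable_cong_sets[OF sPA refl] T_def by measurable
  qed
  have dk: "distr M borel (brow a j) = distr PA borel (T j)" if j: "j \<in> {1..m div 2}" for j
  proof -
    have "distr M borel (brow a j) = distr M borel (\<lambda>w. T j (Av w))"
      using j by (intro distr_cong) (auto simp: T_def Av_def brow_def)
    also have "\<dots> = distr (distr M PA Av) borel (T j)"
      by (rule distr_distr[symmetric, unfolded comp_def]) (intro Tm j, rule Avm)
    finally show ?thesis unfolding dA .
  qed
  show ?thesis
  proof (cases "k = 1")
    case True then show ?thesis by simp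
  next
    case False
    define K1 where "K1 = 2*k-1"
    define K2 where "K2 = 2*k"
    have K: "K1 \<ge> 3" "K2 = K1 + 1" "K2 \<le> m" using False k by (auto simp: K1_def K2_def)
    define f where "f n = (if n = 1 then K1 else if n = 2 then K2 else if n = K1 then 1 else if n = K2 then 2 else n)" for n :: nat
    have ff: "f (f n) = n" for n using K(1,2) unfolding f_def by auto
    have finj: "inj_on f {1..m}" by (rule inj_on_inverseI[of _ f]) (rule ff)
    have fin: "f \<in> {1..m} \<rightarrow> {1..m}" using K unfolding f_def by auto
    have dR: "distr PA (PiM {1..m} (\<lambda>i. \<mu>a)) (\<lambda>\<omega>. \<lambda>n\<in>{1..m}. \<omega> (f n)) = PA"
      unfolding PA_def using distr_PiM_reindex[of "{1..m}" "\<lambda>_. \<mu>a" f "{1..m}"] finj fin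
      by (simp add: \<mu>a_def prob_space_distr am)
    have Rm: "(\<lambda>\<omega>. \<lambda>n\<in>{1..m}. \<omega> (f n)) \<in> measurable PA (PiM {1..m} (\<lambda>i. \<mu>a))"
      unfolding PA_def
    proof (rule measurable_restrict)
      fix n :: nat assume "n \<in> {1..m}"
      then have "f n \<in> {1..m}" using fin by auto
      then show "(\<lambda>\<omega>. \<omega> (f n)) \<in> measurable (PiM {1..m} (\<lambda>_. \<mu>a)) \<mu>a"
        by (rule measurable_component_singleton)
    qed
    have Tm1: "T 1 \<in> borel_measurable (PiM {1..m} (\<lambda>i. \<mu>a))" using Tm[of 1] m unfolding PA_def by auto
    have f12: "f 1 = K1" "f 2 = K2" "f (Suc 0) = K1" unfolding f_def by auto
    have "distr PA borel (T k) = distr PA borel (\<lambda>\<omega>. T 1 (\<lambda>n\<in>{1..m}. \<omega> (f n)))"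
    proof (intro distr_cong refl)
      fix \<omega> :: "nat \<Rightarrow> real^'n"
      have "(1::nat) \<in> {1..m}" "(2::nat) \<in> {1..m}" using m by auto
      then show "T k \<omega> = T 1 (\<lambda>n\<in>{1..m}. \<omega> (f n))" unfolding T_def by (simp add: f12 K1_def K2_def)
    qed
    also have "\<dots> = distr (distr PA (PiM {1..m} (\<lambda>i. \<mu>a)) (\<lambda>\<omega>. \<lambda>n\<in>{1..m}. \<omega> (f n))) borel (T 1)"
      unfolding distr_distr[OF Tm1 Rm] comp_def ..
    also have "\<dots> = distr PA borel (T 1)" unfolding dR ..
    finally show ?thesis using dk[OF k] dk[of 1] m by auto
  qed
qed

lemma law_B:
  fixes a :: "nat \<Rightarrow> 'w \<Rightarrow> real^'n"
  assumes P: "prob_space M" and m: "m \<ge> 2"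
    and am: "\<And>i. i \<in> {1..m} \<Longrightarrow> a i \<in> borel_measurable M"
    and ind: "prob_space.indep_vars M (\<lambda>_. borel) a {1..m}"
    and id: "\<And>i. i \<in> {1..m} \<Longrightarrow> distr M borel (a i) = distr M borel (a 1)"
  shows "distr M (PiM {1..m div 2} (\<lambda>_. borel)) (\<lambda>w. \<lambda>k\<in>{1..m div 2}. brow a k w)
          = PiM {1..m div 2} (\<lambda>_. distr M borel (brow a 1))"
proof -
  interpret prob_space M by (rule P)
  have ib: "indep_vars (\<lambda>_. borel) (brow a) {1..m div 2}"
    by (rule indep_brow[OF P _ am ind]) auto
  have rv: "random_variable borel (brow a k)" if "k \<in> {1..m div 2}" for k
    using that by (intro brow_measurable am) auto
  have "distr M (PiM {1..m div 2} (\<lambda>_. borel)) (\<lambda>w. \<lambda>k\<in>{1..m div 2}. brow a k w)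
          = PiM {1..m div 2} (\<lambda>k. distr M borel (brow a k))"
    using indep_vars_iff_distr_eq_PiM'[where I="{1..m div 2}" and M'="\<lambda>_. borel" and X="brow a"] m rv ib by auto
  also have "\<dots> = PiM {1..m div 2} (\<lambda>_. distr M borel (brow a 1))"
    by (intro PiM_cong refl brow_distr[OF P m am ind id])
  finally show ?thesis .
qed

lemma rad_measure:
  fixes X :: "'w \<Rightarrow> real"
  assumes P: "prob_space M" and X: "rademacher M X" and A: "A \<in> sets borel"
  shows "measure M (X -` A \<inter> space M) = (if 1 \<in> A then 1/2 else 0) + (if -1 \<in> A then 1/2 else 0)"
proof -
  interpret prob_space M by (rule P)
  have Xm[measurable]: "X \<in> borel_measurable M" using X by (simp add: rademacher_def)
  define S1 where "S1 = {w\<in>space M. X w = 1}"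
  define S2 where "S2 = {w\<in>space M. X w = -1}"
  have S[measurable]: "S1 \<in> events" "S2 \<in> events" unfolding S1_def S2_def by measurable
  have m1: "prob S1 = 1/2" "prob S2 = 1/2" using X by (auto simp: rademacher_def S1_def S2_def)
  have dj: "S1 \<inter> S2 = {}" by (auto simp: S1_def S2_def)
  have "prob (S1 \<union> S2) = 1" using finite_measure_Union[OF S dj] m1 by simp
  then have AE12: "AE w in M. w \<in> S1 \<union> S2" by (subst AE_in_set_eq_1) auto
  define C where "C = (if 1 \<in> A then S1 else {}) \<union> (if -1 \<in> A then S2 else {})"
  have C[measurable]: "C \<in> events" unfolding C_def using S by auto
  have "measure M (X -` A \<inter> space M) = measure M C"
  proof (rule measure_eq_AE)
    show "AE x in M. (x \<in> X -` A \<inter> space M) = (x \<in> C)"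
      using AE12 by eventually_elim (auto simp: C_def S1_def S2_def)
  qed (use A in auto)
  also have "\<dots> = (if 1 \<in> A then 1/2 else 0) + (if -1 \<in> A then 1/2 else 0)"
    unfolding C_def using finite_measure_Union[OF S dj] m1 by auto
  finally show ?thesis .
qed

lemma rad_distr:
  assumes P: "prob_space M" and X: "rademacher M X" and Y: "rademacher M Y"
  shows "distr M borel X = distr M borel Y"
proof (rule measure_eqI)
  interpret prob_space M by (rule P)
  have [measurable]: "X \<in> borel_measurable M" "Y \<in> borel_measurable M" using X Y by (auto simp: rademacher_def)
  fix A :: "real set" assume A: "A \<in> sets (distr M borel X)"
  then have A': "A \<in> sets borel" by simp
  show "emeasure (distr M borel X) A = emeasure (distr M borel Y) A"
    using A' by (simp add: emeasure_distr emeasure_eq_measure rad_measure[OF P X A'] rad_measure[OF P Y A'])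
qed simp

lemma AE_signs:
  fixes R :: "real measure"
  assumes fin: "finite I" and R: "prob_space R" and sR: "sets R = sets borel"
    and R1: "measure R {1} = 1/2" and R2: "measure R {-1} = 1/2"
  shows "AE e in PiM I (\<lambda>_. R). e \<in> signs I"
proof -
  interpret R: prob_space R by (rule R)
  have s: "{-1, 1} \<in> sets R" using sR by simp
  have "R.prob {-1, 1} = R.prob {-1} + R.prob {1}"
    using R.finite_measure_Union[of "{-1}" "{1}"] sR by (simp add: insert_commute)
  then have "AE x in R. x \<in> {-1, 1::real}" using R1 R2 by (subst R.AE_in_set_eq_1[OF s]) simp
  then have "AE e in PiM I (\<lambda>_. R). e k \<in> {-1, 1}" if "k \<in> I" for k
    using that by (intro AE_PiM_component) (auto simp: R)
  then have "AE e in PiM I (\<lambda>_. R). \<forall>k\<in>I. e k \<in> {-1, 1}" using fin by (intro eventually_ball_finite) auto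
  then show ?thesis
  proof (rule AE_mp[OF _ AE_I2], intro impI)
    fix e assume "e \<in> space (PiM I (\<lambda>_. R))" "\<forall>k\<in>I. e k \<in> {-1, 1}"
    then show "e \<in> signs I" by (auto simp: signs_def space_PiM PiE_iff)
  qed
qed

lemma signs_singleton:
  fixes R :: "real measure"
  assumes fin: "finite I" and R: "prob_space R" and sR: "sets R = sets borel"
    and R1: "measure R {1} = 1/2" and R2: "measure R {-1} = 1/2" and e: "e \<in> signs I"
  shows "{e} \<in> sets (PiM I (\<lambda>_. R))" "measure (PiM I (\<lambda>_. R)) {e} = 1 / 2 ^ card I"
proof -
  interpret R: prob_space R by (rule R)
  interpret PS: product_sigma_finite "\<lambda>_. R"
    unfolding product_sigma_finite_def using prob_space_imp_sigma_finite[OF R] by simp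
  interpret PP: prob_space "PiM I (\<lambda>_. R)" by (rule prob_space_PiM) (use R in auto)
  have eq: "{e} = PiE I (\<lambda>k. {e k})" using e by (auto simp: signs_def PiE_iff extensional_def fun_eq_iff) metis
  show sing: "{e} \<in> sets (PiM I (\<lambda>_. R))" unfolding eq by (rule sets_PiM_I_finite) (use fin sR in auto)
  have ek: "measure R {e k} = 1/2" if "k \<in> I" for k
  proof -
    have "e k \<in> {-1, 1}" using e that unfolding signs_def by blast
    then show ?thesis using R1 R2 by auto
  qed
  have "emeasure (PiM I (\<lambda>_. R)) {e} = (\<Prod>k\<in>I. emeasure R {e k})"
    unfolding eq by (rule PS.emeasure_PiM[OF fin]) (use sR in auto)
  also have "\<dots> = (\<Prod>k\<in>I. ennreal (1/2))"
    by (intro prod.cong refl) (simp add: R.emeasure_eq_measure ek)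
  also have "\<dots> = ennreal (\<Prod>k\<in>I. 1/2)" by (rule prod_ennreal) simp
  also have "\<dots> = ennreal (1 / 2 ^ card I)" by (simp add: power_one_over)
  finally show "measure (PiM I (\<lambda>_. R)) {e} = 1 / 2 ^ card I"
    by (simp add: PP.emeasure_eq_measure)
qed

lemma integral_signs:
  fixes R :: "real measure" and h :: "(nat \<Rightarrow> real) \<Rightarrow> real"
  assumes fin: "finite I" and R: "prob_space R" and sR: "sets R = sets borel"
    and R1: "measure R {1} = 1/2" and R2: "measure R {-1} = 1/2"
    and hm[measurable]: "h \<in> borel_measurable (PiM I (\<lambda>_. R))"
  shows "(\<integral>e. h e \<partial>PiM I (\<lambda>_. R)) = (\<Sum>e\<in>signs I. h e) / 2 ^ card I"
proof -
  interpret PP: prob_space "PiM I (\<lambda>_. R)" by (rule prob_space_PiM) (use R in auto)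
  have sS[measurable]: "signs I \<in> sets (PiM I (\<lambda>_. R))" unfolding signs_def
    by (rule sets_PiM_I_finite) (use fin sR in auto)
  have "(\<integral>e. h e \<partial>PiM I (\<lambda>_. R)) = (\<integral>e. h e * indicator (signs I) e \<partial>PiM I (\<lambda>_. R))"
    by (rule integral_cong_AE) (use AE_signs[OF assms(1-5)] in \<open>auto elim!: eventually_mono\<close>)
  also have "\<dots> = (\<Sum>e\<in>signs I. h e * measure (PiM I (\<lambda>_. R)) {e})"
    by (rule integral_indicator_finite_real)
       (auto simp: finite_signs fin signs_singleton[OF assms(1-5)] PP.emeasure_eq_measure)
  also have "\<dots> = (\<Sum>e\<in>signs I. h e) / 2 ^ card I"
    by (simp add: signs_singleton[OF assms(1-5)] sum_divide_distrib)
  finally show ?thesis .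
qed

lemma law_BE:
  fixes a :: "nat \<Rightarrow> 'w \<Rightarrow> real^'n" and eps :: "nat \<Rightarrow> 'w \<Rightarrow> real"
  assumes P: "prob_space M" and m: "m \<ge> 2"
    and am: "\<And>i. i \<in> {1..m} \<Longrightarrow> a i \<in> borel_measurable M"
    and ind: "prob_space.indep_vars M (\<lambda>_. borel) a {1..m}"
    and id: "\<And>i. i \<in> {1..m} \<Longrightarrow> distr M borel (a i) = distr M borel (a 1)"
    and rad: "\<And>k. k \<in> {1..m div 2} \<Longrightarrow> rademacher M (eps k)"
    and inde: "prob_space.indep_vars M (\<lambda>_. borel) eps {1..m div 2}"
    and indset: "prob_space.indep_set M
           (sets (vimage_algebra (space M) (\<lambda>w. restrict (\<lambda>i. a i w) {1..m})
                   (PiM {1..m} (\<lambda>_. borel))))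
           (sets (vimage_algebra (space M) (\<lambda>w. restrict (\<lambda>k. eps k w) {1..m div 2})
                   (PiM {1..m div 2} (\<lambda>_. borel))))"
  shows "distr M (PiM {1..m div 2} (\<lambda>_. borel) \<Otimes>\<^sub>M PiM {1..m div 2} (\<lambda>_. borel))
            (\<lambda>w. (\<lambda>k\<in>{1..m div 2}. brow a k w, \<lambda>k\<in>{1..m div 2}. eps k w))
         = PiM {1..m div 2} (\<lambda>_. distr M borel (brow a 1)) \<Otimes>\<^sub>M PiM {1..m div 2} (\<lambda>_. distr M borel (eps 1))"
proof -
  interpret prob_space M by (rule P)
  define I where "I = {1..m div 2}"
  define Bv where "Bv w = (\<lambda>k\<in>I. brow a k w)" for w
  define Ev where "Ev w = (\<lambda>k\<in>I. eps k w)" for w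
  define Av where "Av w = (\<lambda>i\<in>{1..m}. a i w)" for w
  define T where "T y = (\<lambda>k\<in>I. (1 / sqrt 2) *\<^sub>R (y (2*k-1) - y (2*k)))" for y :: "nat \<Rightarrow> real^'n"
  have epsm[measurable]: "eps k \<in> borel_measurable M" if "k \<in> I" for k
    using rad[of k] that by (simp add: rademacher_def I_def)
  have Bvm[measurable]: "Bv \<in> measurable M (PiM I (\<lambda>_. borel))"
    unfolding Bv_def by (intro measurable_restrict brow_measurable am) (auto simp: I_def)
  have Evm[measurable]: "Ev \<in> measurable M (PiM I (\<lambda>_. borel))"
    unfolding Ev_def by (intro measurable_restrict epsm)
  have Avm: "Av \<in> measurable M (PiM {1..m} (\<lambda>_. borel))"
    unfolding Av_def by (intro measurable_restrict am)
  have Tm: "T \<in> measurable (PiM {1..m} (\<lambda>_. borel)) (PiM I (\<lambda>_. borel :: (real^'n) measure))"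
    unfolding T_def
  proof (rule measurable_restrict)
    fix k assume k: "k \<in> I"
    have c1[measurable]: "(\<lambda>x. x (2*k-1)) \<in> measurable (PiM {1..m} (\<lambda>_. borel :: (real^'n) measure)) borel"
      by (rule measurable_component_singleton) (use k in \<open>auto simp: I_def\<close>)
    have c2[measurable]: "(\<lambda>x. x (2*k)) \<in> measurable (PiM {1..m} (\<lambda>_. borel :: (real^'n) measure)) borel"
      by (rule measurable_component_singleton) (use k in \<open>auto simp: I_def\<close>)
    show "(\<lambda>y::nat \<Rightarrow> real^'n. (1 / sqrt 2) *\<^sub>R (y (2*k-1) - y (2*k))) \<in> borel_measurable (PiM {1..m} (\<lambda>_. borel :: (real^'n) measure))"
      by measurable
  qed
  have BT: "Bv w = T (Av w)" for w
    unfolding Bv_def T_def Av_def brow_def by (auto simp: I_def fun_eq_iff)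
  define SA where "SA = sets (vimage_algebra (space M) Av (PiM {1..m} (\<lambda>_. borel)))"
  define SE where "SE = sets (vimage_algebra (space M) Ev (PiM I (\<lambda>_. borel)))"
  have iSE: "indep_set SA SE" using indset unfolding SA_def SE_def Av_def Ev_def I_def .
  have SAe: "SA = sigma_sets (space M) {Av -` A \<inter> space M | A. A \<in> sets (PiM {1..m} (\<lambda>_. borel))}"
    unfolding SA_def by (rule sets_vimage_algebra)
  have SEe: "SE = sigma_sets (space M) {Ev -` A \<inter> space M | A. A \<in> sets (PiM I (\<lambda>_. borel))}"
    unfolding SE_def by (rule sets_vimage_algebra)
  have sub1: "sigma_sets (space M) {Bv -` A \<inter> space M | A. A \<in> sets (PiM I (\<lambda>_. borel))} \<subseteq> SA"
    unfolding SAe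
  proof (rule sigma_sets_subseteq, safe)
    fix A assume A: "A \<in> sets (PiM I (\<lambda>_. borel :: (real^'n) measure))"
    have "Bv -` A \<inter> space M = Av -` (T -` A \<inter> space (PiM {1..m} (\<lambda>_. borel))) \<inter> space M"
      using measurable_space[OF Avm] by (auto simp: BT)
    moreover have "T -` A \<inter> space (PiM {1..m} (\<lambda>_. borel)) \<in> sets (PiM {1..m} (\<lambda>_. borel))"
      using measurable_sets[OF Tm A] .
    ultimately show "\<exists>A'. Bv -` A \<inter> space M = Av -` A' \<inter> space M \<and> A' \<in> sets (PiM {1..m} (\<lambda>_. borel))"
      by blast
  qed
  have sub2: "sigma_sets (space M) {Ev -` A \<inter> space M | A. A \<in> sets (PiM I (\<lambda>_. borel))} \<subseteq> SE"
    unfolding SEe by simp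
  have indAB: "prob (Bv -` A \<inter> space M \<inter> (Ev -` B \<inter> space M)) = prob (Bv -` A \<inter> space M) * prob (Ev -` B \<inter> space M)"
    if A: "A \<in> sets (PiM I (\<lambda>_. borel))" and B: "B \<in> sets (PiM I (\<lambda>_. borel))" for A B
  proof -
    have "Bv -` A \<inter> space M \<in> SA" using sub1 A by blast
    moreover have "Ev -` B \<inter> space M \<in> SE" using sub2 B by blast
    ultimately show ?thesis using iSE unfolding indep_sets2_eq by blast
  qed
  have iv: "distr M (PiM I (\<lambda>_. borel)) Bv \<Otimes>\<^sub>M distr M (PiM I (\<lambda>_. borel)) Ev
      = distr M (PiM I (\<lambda>_. borel) \<Otimes>\<^sub>M PiM I (\<lambda>_. borel)) (\<lambda>w. (Bv w, Ev w))"
  proof (rule pair_measure_eqI)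
    show "sigma_finite_measure (distr M (PiM I (\<lambda>_. borel)) Bv)"
      by (intro prob_space_imp_sigma_finite prob_space_distr Bvm)
    show "sigma_finite_measure (distr M (PiM I (\<lambda>_. borel)) Ev)"
      by (intro prob_space_imp_sigma_finite prob_space_distr Evm)
    show "sets (distr M (PiM I (\<lambda>_. borel)) Bv \<Otimes>\<^sub>M distr M (PiM I (\<lambda>_. borel)) Ev) =
          sets (distr M (PiM I (\<lambda>_. borel) \<Otimes>\<^sub>M PiM I (\<lambda>_. borel)) (\<lambda>w. (Bv w, Ev w)))"
      unfolding sets_distr by (intro sets_pair_measure_cong) auto
    fix A B assume A: "A \<in> sets (distr M (PiM I (\<lambda>_. borel)) Bv)" and B: "B \<in> sets (distr M (PiM I (\<lambda>_. borel)) Ev)"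
    then have A': "A \<in> sets (PiM I (\<lambda>_. borel))" and B': "B \<in> sets (PiM I (\<lambda>_. borel))" by auto
    have "(\<lambda>w. (Bv w, Ev w)) -` (A \<times> B) \<inter> space M = Bv -` A \<inter> space M \<inter> (Ev -` B \<inter> space M)" by auto
    then show "emeasure (distr M (PiM I (\<lambda>_. borel)) Bv) A * emeasure (distr M (PiM I (\<lambda>_. borel)) Ev) B =
          emeasure (distr M (PiM I (\<lambda>_. borel) \<Otimes>\<^sub>M PiM I (\<lambda>_. borel)) (\<lambda>w. (Bv w, Ev w))) (A \<times> B)"
      using A' B' by (simp add: emeasure_distr emeasure_eq_measure indAB ennreal_mult measure_nonneg)
  qed
  have dB: "distr M (PiM I (\<lambda>_. borel)) Bv = PiM I (\<lambda>_. distr M borel (brow a 1))"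
    unfolding Bv_def I_def by (rule law_B[OF P m am ind id])
  have rvE: "random_variable borel (eps k)" if "k \<in> I" for k using that by simp
  have dE: "distr M (PiM I (\<lambda>_. borel)) Ev = PiM I (\<lambda>_. distr M borel (eps 1))"
  proof -
    have "distr M (PiM I (\<lambda>_. borel)) Ev = PiM I (\<lambda>k. distr M borel (eps k))"
      using indep_vars_iff_distr_eq_PiM'[where I=I and M'="\<lambda>_. borel" and X=eps] m rvE inde
      unfolding Ev_def I_def by auto
    also have "\<dots> = PiM I (\<lambda>_. distr M borel (eps 1))"
      by (intro PiM_cong refl rad_distr[OF P] rad) (use m in \<open>auto simp: I_def\<close>)
    finally show ?thesis .
  qed
  show ?thesis
    using iv dB dE unfolding Bv_def Ev_def I_def by simp
qed

lemma sum_abs_bound: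
  fixes f :: "'k \<Rightarrow> real"
  assumes "\<And>k. k \<in> I \<Longrightarrow> \<bar>f k\<bar> \<le> c"
  shows "\<bar>\<Sum>k\<in>I. f k\<bar> \<le> real (card I) * c"
proof -
  have "\<bar>\<Sum>k\<in>I. f k\<bar> \<le> (\<Sum>k\<in>I. \<bar>f k\<bar>)" by (rule sum_abs)
  also have "\<dots> \<le> (\<Sum>k\<in>I. c)" by (intro sum_mono assms)
  finally show ?thesis by simp
qed

lemma SUP_abs_bound:
  fixes f :: "'v \<Rightarrow> real"
  assumes "D \<noteq> {}" "\<And>v. v \<in> D \<Longrightarrow> \<bar>f v\<bar> \<le> B"
  shows "\<bar>SUP v\<in>D. f v\<bar> \<le> B"
proof -
  have b: "bdd_above (f ` D)" using assms(2) by (intro bdd_aboveI2[of _ _ B]) (auto simp: abs_le_iff)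
  have "(SUP v\<in>D. f v) \<le> B" using assms by (intro cSUP_least) (auto simp: abs_le_iff)
  moreover obtain d where d: "d \<in> D" using assms by auto
  have "f d \<le> (SUP v\<in>D. f v)" by (rule cSUP_upper[OF d b])
  moreover have "-B \<le> f d" using assms(2)[OF d] by auto
  ultimately show ?thesis by auto
qed

lemma SUP_add_le:
  fixes f g :: "'v \<Rightarrow> real"
  assumes "D \<noteq> {}" "bdd_above (f ` D)" "bdd_above (g ` D)"
  shows "(SUP v\<in>D. f v + g v) \<le> (SUP v\<in>D. f v) + (SUP v\<in>D. g v)"
  using assms by (intro cSUP_least) (auto intro!: add_mono cSUP_upper)

lemma bdd_abs: "(\<And>v. v \<in> D \<Longrightarrow> \<bar>f v\<bar> \<le> (B::real)) \<Longrightarrow> bdd_above (f ` D)"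
  by (rule bdd_aboveI2[of _ _ B]) (auto simp: abs_le_iff)

lemma comp_q_meas:
  assumes "k \<in> K" "q \<in> borel_measurable \<mu>"
  shows "(\<lambda>\<omega>. q (\<omega> k)) \<in> borel_measurable (PiM K (\<lambda>_. \<mu>))"
  using measurable_compose[OF measurable_component_singleton[OF assms(1)] assms(2)] by simp

lemma symmetrization:
  fixes \<mu> :: "'a measure" and q :: "'v \<Rightarrow> 'a \<Rightarrow> real" and D :: "'v set" and p :: nat and c :: real
  assumes P: "prob_space \<mu>" and p: "p \<ge> 1" and Dc: "countable D" and Dne: "D \<noteq> {}"
    and qm: "\<And>v. q v \<in> borel_measurable \<mu>" and qb: "\<And>v y. 0 \<le> q v y \<and> q v y \<le> c"
  shows "(\<integral>x. (SUP v\<in>D. (\<integral>y. q v y \<partial>\<mu>) - (1 / real p) * (\<Sum>k\<in>{1..p}. q v (x k))) \<partial>PiM {1..p} (\<lambda>_. \<mu>))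
     \<le> (2 / real p) * (\<integral>x. (\<Sum>e\<in>signs {1..p}. SUP v\<in>D. \<Sum>k\<in>{1..p}. e k * q v (x k)) / 2 ^ p \<partial>PiM {1..p} (\<lambda>_. \<mu>))"
proof -
  interpret \<mu>: prob_space \<mu> by (rule P)
  interpret PS: product_sigma_finite "\<lambda>_. \<mu>"
    unfolding product_sigma_finite_def using prob_space_imp_sigma_finite[OF P] by simp
  have PK: "prob_space (PiM K (\<lambda>_. \<mu>))" for K :: "nat set" by (rule prob_space_PiM) (use P in auto)
  define I where "I = {1..p}"
  define I' where "I' = {p+1..2*p}"
  define J where "J = {1..2*p}"
  have JII: "J = I \<union> I'" and dj: "I \<inter> I' = {}" by (auto simp: I_def I'_def J_def)
  have finI: "finite I" "finite I'" "finite J" by (auto simp: I_def I'_def J_def)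
  have cardI: "card I = p" by (simp add: I_def)
  have kI: "k \<in> J" "k + p \<in> J" "k + p \<in> I'" "k + p \<notin> I" if "k \<in> I" for k using that by (auto simp: I_def I'_def J_def)
  define Pb where "Pb = PiM I (\<lambda>_. \<mu>)"
  define PI' where "PI' = PiM I' (\<lambda>_. \<mu>)"
  define PJ where "PJ = PiM J (\<lambda>_. \<mu>)"
  interpret Pb: prob_space Pb unfolding Pb_def by (rule PK)
  interpret PI': prob_space PI' unfolding PI'_def by (rule PK)
  interpret PJ: prob_space PJ unfolding PJ_def by (rule PK)
  have c0: "c \<ge> 0" using qb[of undefined undefined] by linarith
  define G where "G v = (\<integral>y. q v y \<partial>\<mu>)" for v
  define z where "z x = (SUP v\<in>D. G v - (1 / real p) * (\<Sum>k\<in>I. q v (x k)))" for x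
  define A where "A e x = (SUP v\<in>D. \<Sum>k\<in>I. e k * q v (x k))" for e x
  define Sv where "Sv v w = (\<Sum>k\<in>I. q v (w (k+p)) - q v (w k))" for v w
  define H where "H w = (SUP v\<in>D. Sv v w)" for w
  have qd: "\<bar>q v y - q v y'\<bar> \<le> c" for v y y' using qb[of v y] qb[of v y'] by linarith
  have Svb: "\<bar>Sv v w\<bar> \<le> real p * c" for v w
    unfolding Sv_def using sum_abs_bound[of I "\<lambda>k. q v (w (k+p)) - q v (w k)" c] qd cardI by simp
  have Hb: "\<bar>H w\<bar> \<le> real p * c" for w unfolding H_def by (rule SUP_abs_bound[OF Dne Svb])
  have Svm: "Sv v \<in> borel_measurable PJ" for v
    unfolding Sv_def PJ_def
    by (intro borel_measurable_sum borel_measurable_diff comp_q_meas qm kI)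
  have Hm: "H \<in> borel_measurable PJ"
    unfolding H_def[abs_def] by (rule borel_measurable_cSUP[OF Dc Svm]) (rule bdd_abs, rule Svb)
  have Hint: "integrable PJ H" by (rule PJ.integrable_const_bound[where B="real p * c"]) (use Hb Hm in auto)
  have eb: "\<bar>e k\<bar> = 1" if "e \<in> signs I" "k \<in> I" for e k
  proof -
    have "e k \<in> {-1, 1}" using that unfolding signs_def by blast
    then show ?thesis by auto
  qed
  have Aeb: "\<bar>\<Sum>k\<in>I. e k * q v (x k)\<bar> \<le> real p * c" if e: "e \<in> signs I" for e v x
    using sum_abs_bound[of I "\<lambda>k. e k * q v (x k)" c] cardI qb eb[OF e] by (simp add: abs_mult)
  have Ab: "\<bar>A e x\<bar> \<le> real p * c" if e: "e \<in> signs I" for e x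
    unfolding A_def by (rule SUP_abs_bound[OF Dne Aeb[OF e]])
  have Am: "A e \<in> borel_measurable (PiM K (\<lambda>_. \<mu>))" if e: "e \<in> signs I" and K: "I \<subseteq> K" for e K
    unfolding A_def[abs_def]
    by (rule borel_measurable_cSUP[OF Dc])
       (use K in \<open>auto intro!: borel_measurable_sum borel_measurable_times borel_measurable_const comp_q_meas qm bdd_abs Aeb e\<close>)
  have Aint: "integrable Pb (A e)" if e: "e \<in> signs I" for e
    by (rule Pb.integrable_const_bound[where B="real p * c"]) (use Ab[OF e] Am[OF e] in \<open>auto simp: Pb_def\<close>)
  have zvb: "\<bar>G v - (1 / real p) * (\<Sum>k\<in>I. q v (x k))\<bar> \<le> c" for v x
    proof -
      have G0: "0 \<le> G v" unfolding G_def using qb by (intro integral_nonneg_AE AE_I2) auto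
      have "G v \<le> (\<integral>y. c \<partial>\<mu>)" unfolding G_def
        by (rule integral_mono) (use qb qm in \<open>auto intro!: \<mu>.integrable_const_bound[where B=c]\<close>)
      then have G1: "G v \<le> c" by (simp add: \<mu>.prob_space)
      have S0: "0 \<le> (\<Sum>k\<in>I. q v (x k))" using qb by (intro sum_nonneg) auto
      have "(\<Sum>k\<in>I. q v (x k)) \<le> (\<Sum>k\<in>I. c)" using qb by (intro sum_mono) auto
      then have S1: "(\<Sum>k\<in>I. q v (x k)) \<le> real p * c" using cardI by simp
      have "0 \<le> (1 / real p) * (\<Sum>k\<in>I. q v (x k))" using S0 by simp
      moreover have "(1 / real p) * (\<Sum>k\<in>I. q v (x k)) \<le> c" using S1 p by (simp add: field_simps)
      moreover note G0 G1
      ultimately show ?thesis by (simp add: abs_le_iff)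
    qed
  have zb: "\<bar>z x\<bar> \<le> c" for x
    unfolding z_def by (intro SUP_abs_bound[OF Dne] zvb)
  have zm: "z \<in> borel_measurable Pb"
    unfolding z_def[abs_def] Pb_def
  proof (rule borel_measurable_cSUP[OF Dc])
    fix v show "(\<lambda>x. G v - (1 / real p) * (\<Sum>k\<in>I. q v (x k))) \<in> borel_measurable (PiM I (\<lambda>_. \<mu>))"
      by (intro borel_measurable_diff borel_measurable_const borel_measurable_times borel_measurable_sum comp_q_meas qm)
    fix x show "bdd_above ((\<lambda>v. G v - (1 / real p) * (\<Sum>k\<in>I. q v (x k))) ` D)"
      by (rule bdd_abs, rule zvb)
  qed
  have A1: "(\<integral>x. z x \<partial>Pb) \<le> (1 / real p) * (\<integral>w. H w \<partial>PJ)"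
  proof -
    have PJ_eq: "PJ = PiM (I \<union> I') (\<lambda>_. \<mu>)" by (simp add: PJ_def JII)
    have Hm': "H \<in> borel_measurable (PiM (I \<union> I') (\<lambda>_. \<mu>))" using Hm by (simp add: PJ_eq)
    have Hint': "integrable (PiM (I \<union> I') (\<lambda>_. \<mu>)) H" using Hint by (simp add: PJ_eq)
    have fold: "(\<integral>w. H w \<partial>PJ) = (\<integral>x. (\<integral>y. H (merge I I' (x, y)) \<partial>PI') \<partial>Pb)"
      unfolding PJ_eq Pb_def PI'_def by (rule PS.product_integral_fold[OF dj finI(1,2) Hint'])
    have Hmm: "(\<lambda>(x, y). H (merge I I' (x, y))) \<in> borel_measurable (Pb \<Otimes>\<^sub>M PI')"
      unfolding Pb_def PI'_def using measurable_comp[OF measurable_merge Hm'] by (simp add: comp_def case_prod_beta)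
    have innm: "(\<lambda>x. \<integral>y. H (merge I I' (x, y)) \<partial>PI') \<in> borel_measurable Pb"
      by (rule sigma_finite_measure.borel_measurable_lebesgue_integral[OF prob_space_imp_sigma_finite[OF PI'.prob_space_axioms]])
         (use Hmm in simp)
    have secm: "(\<lambda>y. H (merge I I' (x, y))) \<in> borel_measurable PI'" if "x \<in> space Pb" for x
      using measurable_Pair2[OF Hmm that] by simp
    have secint: "integrable PI' (\<lambda>y. H (merge I I' (x, y)))" if "x \<in> space Pb" for x
      by (rule PI'.integrable_const_bound[where B="real p * c"]) (use Hb secm[OF that] in auto)
    have innb: "\<bar>\<integral>y. H (merge I I' (x, y)) \<partial>PI'\<bar> \<le> real p * c" for x
    proof -
      have "\<bar>\<integral>y. H (merge I I' (x, y)) \<partial>PI'\<bar> \<le> (\<integral>y. \<bar>H (merge I I' (x, y))\<bar> \<partial>PI')" by (rule integral_abs_bound)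
      also have "\<dots> \<le> (\<integral>y. real p * c \<partial>PI')"
        by (rule integral_mono_AE') (use Hb c0 in auto)
      finally show ?thesis by (simp add: PI'.prob_space)
    qed
    have Gk: "(\<integral>y. q v (y (k+p)) \<partial>PI') = G v" if k: "k \<in> I" for v k
    proof -
      have dc: "distr PI' \<mu> (\<lambda>\<omega>. \<omega> (k+p)) = \<mu>" unfolding PI'_def
        by (rule distr_PiM_component) (use P kI[OF k] in auto)
      have "G v = (\<integral>y. q v y \<partial>distr PI' \<mu> (\<lambda>\<omega>. \<omega> (k+p)))" unfolding dc G_def ..
      also have "\<dots> = (\<integral>y. q v (y (k+p)) \<partial>PI')"
        by (rule integral_distr) (use kI[OF k] qm in \<open>auto simp: PI'_def\<close>)
      finally show ?thesis by simp
    qed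
    have pw: "z x \<le> (1 / real p) * (\<integral>y. H (merge I I' (x, y)) \<partial>PI')" if x: "x \<in> space Pb" for x
      unfolding z_def
    proof (rule cSUP_least[OF Dne])
      fix v assume v: "v \<in> D"
      have mI: "merge I I' (x, y) k = x k" "merge I I' (x, y) (k+p) = y (k+p)" if "k \<in> I" for k y
        using that kI[OF that] by (auto simp: merge_def)
      have qkm: "(\<lambda>y. q v (y (k+p))) \<in> borel_measurable PI'" if k: "k \<in> I" for k
        unfolding PI'_def by (rule comp_q_meas[OF kI(3)[OF k] qm])
      have qint: "integrable PI' (\<lambda>y. q v (y (k+p)) - q v (x k))" if k: "k \<in> I" for k
        by (rule PI'.integrable_const_bound[where B="c"]) (use qd qkm[OF k] in auto)
      have "(\<integral>y. Sv v (merge I I' (x, y)) \<partial>PI') = (\<integral>y. (\<Sum>k\<in>I. q v (y (k+p)) - q v (x k)) \<partial>PI')"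
        unfolding Sv_def by (intro Bochner_Integration.integral_cong refl sum.cong) (auto simp: mI)
      also have "\<dots> = (\<Sum>k\<in>I. \<integral>y. q v (y (k+p)) - q v (x k) \<partial>PI')"
        by (rule Bochner_Integration.integral_sum) (rule qint)
      also have "\<dots> = (\<Sum>k\<in>I. G v - q v (x k))"
      proof (rule sum.cong[OF refl])
        fix k assume k: "k \<in> I"
        have "(\<integral>y. q v (y (k+p)) - q v (x k) \<partial>PI') = (\<integral>y. q v (y (k+p)) \<partial>PI') - (\<integral>y. q v (x k) \<partial>PI')"
          by (rule Bochner_Integration.integral_diff)
             (use qb qkm[OF k] in \<open>auto intro!: PI'.integrable_const_bound[where B=c]\<close>)
        then show "(\<integral>y. q v (y (k+p)) - q v (x k) \<partial>PI') = G v - q v (x k)" by (simp add: Gk[OF k] PI'.prob_space)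
      qed
      finally have eq: "(\<Sum>k\<in>I. G v - q v (x k)) = (\<integral>y. Sv v (merge I I' (x, y)) \<partial>PI')" ..
      have "(\<integral>y. Sv v (merge I I' (x, y)) \<partial>PI') \<le> (\<integral>y. H (merge I I' (x, y)) \<partial>PI')"
      proof (rule integral_mono)
        show "integrable PI' (\<lambda>y. Sv v (merge I I' (x, y)))"
          unfolding eq[symmetric] Sv_def
          by (rule Bochner_Integration.integrable_cong[THEN iffD1, OF refl _ Bochner_Integration.integrable_sum[OF qint]])
             (auto simp: mI)
        show "integrable PI' (\<lambda>y. H (merge I I' (x, y)))" by (rule secint[OF x])
        fix y show "Sv v (merge I I' (x, y)) \<le> H (merge I I' (x, y))"
          unfolding H_def by (rule cSUP_upper[OF v bdd_abs[OF Svb]])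
      qed
      then have "(\<Sum>k\<in>I. G v - q v (x k)) \<le> (\<integral>y. H (merge I I' (x, y)) \<partial>PI')" using eq by simp
      moreover have "(\<Sum>k\<in>I. G v - q v (x k)) = real p * G v - (\<Sum>k\<in>I. q v (x k))"
        by (simp add: sum_subtractf cardI)
      ultimately have L: "real p * G v - (\<Sum>k\<in>I. q v (x k)) \<le> (\<integral>y. H (merge I I' (x, y)) \<partial>PI')" by simp
      have "(real p * G v - (\<Sum>k\<in>I. q v (x k))) / real p \<le> (\<integral>y. H (merge I I' (x, y)) \<partial>PI') / real p"
        using L p by (intro divide_right_mono) auto
      moreover have "(real p * G v - (\<Sum>k\<in>I. q v (x k))) / real p = G v - (1 / real p) * (\<Sum>k\<in>I. q v (x k))"
        using p by (simp add: field_simps)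
      ultimately show "G v - (1 / real p) * (\<Sum>k\<in>I. q v (x k)) \<le> (1 / real p) * (\<integral>y. H (merge I I' (x, y)) \<partial>PI')"
        by simp
    qed
    have "(\<integral>x. z x \<partial>Pb) \<le> (\<integral>x. (1 / real p) * (\<integral>y. H (merge I I' (x, y)) \<partial>PI') \<partial>Pb)"
    proof (rule integral_mono)
      show "integrable Pb z" by (rule Pb.integrable_const_bound[where B=c]) (use zb zm in auto)
      show "integrable Pb (\<lambda>x. (1 / real p) * (\<integral>y. H (merge I I' (x, y)) \<partial>PI'))"
        by (intro integrable_mult_right Pb.integrable_const_bound[where B="real p * c"]) (use innb innm in auto)
    qed (rule pw)
    also have "\<dots> = (1 / real p) * (\<integral>w. H w \<partial>PJ)" unfolding fold by simp
    finally show ?thesis .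
  qed
  have A2: "(\<integral>w. H w \<partial>PJ) \<le> (\<integral>x. A e x \<partial>Pb) + (\<integral>x. A (\<lambda>k\<in>I. - e k) x \<partial>Pb)" if e: "e \<in> signs I" for e
  proof -
    define ne where "ne = (\<lambda>k\<in>I. - e k)"
    have ne: "ne \<in> signs I" using e unfolding signs_def ne_def by (auto simp: PiE_iff)
    have e1: "e k = -1 \<or> e k = 1" if "k \<in> I" for k using e that unfolding signs_def by auto
    define \<tau> where "\<tau> j = (if j \<in> I \<and> e j = -1 then j + p else if j \<in> I' \<and> e (j - p) = -1 then j - p else j)" for j
    have t1: "\<tau> k = (if e k = -1 then k + p else k)" if k: "k \<in> I" for k
      using k dj by (auto simp: \<tau>_def)
    have t2: "\<tau> (k + p) = (if e k = -1 then k else k + p)" if k: "k \<in> I" for k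
      using kI[OF k] by (auto simp: \<tau>_def)
    have Jc: "j \<in> I \<or> (\<exists>k\<in>I. j = k + p)" if "j \<in> J" for j
    proof (cases "j \<le> p")
      case True then show ?thesis using that by (auto simp: I_def J_def)
    next
      case False then have "j - p \<in> I" "j = (j - p) + p" using that by (auto simp: I_def J_def)
      then show ?thesis by blast
    qed
    have kJ: "k \<in> J" if "k \<in> I" for k using kI[OF that] by simp
    have tJ: "\<tau> \<in> J \<rightarrow> J"
    proof
      fix j assume j: "j \<in> J"
      from Jc[OF j] show "\<tau> j \<in> J"
      proof
        assume k: "j \<in> I" then show ?thesis using t1[OF k] kI[OF k] by auto
      next
        assume "\<exists>k\<in>I. j = k + p"
        then obtain k where k: "k \<in> I" and jk: "j = k + p" by blast
        then show ?thesis using t2[OF k] kI[OF k] kJ[OF k] by auto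
      qed
    qed
    have tt: "\<tau> (\<tau> j) = j" if j: "j \<in> J" for j
    proof -
      from Jc[OF j] show ?thesis
      proof
        assume k: "j \<in> I" then show ?thesis using t1[OF k] t2[OF k] by auto
      next
        assume "\<exists>k\<in>I. j = k + p"
        then obtain k where k: "k \<in> I" and jk: "j = k + p" by blast
        then show ?thesis using t1[OF k] t2[OF k] by auto
      qed
    qed
    have tinj: "inj_on \<tau> J" by (rule inj_on_inverseI[of _ \<tau>]) (rule tt)
    have RP: "distr PJ (PiM J (\<lambda>i. \<mu>)) (\<lambda>\<omega>. \<lambda>n\<in>J. \<omega> (\<tau> n)) = PiM J (\<lambda>i. \<mu>)"
      unfolding PJ_def by (rule distr_PiM_reindex) (use P tinj tJ in auto)
    have Rm: "(\<lambda>\<omega>. \<lambda>n\<in>J. \<omega> (\<tau> n)) \<in> measurable PJ PJ"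
      unfolding PJ_def
    proof (rule measurable_restrict)
      fix n assume "n \<in> J" then have "\<tau> n \<in> J" using tJ by auto
      then show "(\<lambda>\<omega>. \<omega> (\<tau> n)) \<in> measurable (PiM J (\<lambda>_. \<mu>)) \<mu>" by (rule measurable_component_singleton)
    qed
    define He where "He w = (SUP v\<in>D. \<Sum>k\<in>I. e k * (q v (w (k+p)) - q v (w k)))" for w
    have HR: "H (\<lambda>n\<in>J. \<omega> (\<tau> n)) = He \<omega>" for \<omega>
      unfolding H_def He_def
    proof (intro SUP_cong refl)
      fix v show "Sv v (\<lambda>n\<in>J. \<omega> (\<tau> n)) = (\<Sum>k\<in>I. e k * (q v (\<omega> (k+p)) - q v (\<omega> k)))"
        unfolding Sv_def
      proof (rule sum.cong[OF refl])
        fix k assume k: "k \<in> I"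
        show "q v ((\<lambda>n\<in>J. \<omega> (\<tau> n)) (k+p)) - q v ((\<lambda>n\<in>J. \<omega> (\<tau> n)) k) = e k * (q v (\<omega> (k+p)) - q v (\<omega> k))"
          using e1[OF k] kI[OF k] kJ[OF k] t1[OF k] t2[OF k] by auto
      qed
    qed
    have "(\<integral>w. H w \<partial>PJ) = (\<integral>w. H w \<partial>distr PJ PJ (\<lambda>\<omega>. \<lambda>n\<in>J. \<omega> (\<tau> n)))"
      using RP unfolding PJ_def by simp
    also have "\<dots> = (\<integral>\<omega>. H (\<lambda>n\<in>J. \<omega> (\<tau> n)) \<partial>PJ)" by (rule integral_distr[OF Rm Hm])
    also have "\<dots> = (\<integral>\<omega>. He \<omega> \<partial>PJ)" unfolding HR ..
    finally have HHe: "(\<integral>w. H w \<partial>PJ) = (\<integral>\<omega>. He \<omega> \<partial>PJ)" .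
    define sh where "sh \<omega> = (\<lambda>n\<in>I. \<omega> (n + p))" for \<omega> :: "nat \<Rightarrow> 'a"
    define rs where "rs \<omega> = (\<lambda>n\<in>I. \<omega> n)" for \<omega> :: "nat \<Rightarrow> 'a"
    have shm: "sh \<in> measurable PJ Pb" unfolding sh_def PJ_def Pb_def
    proof (rule measurable_restrict)
      fix n assume "n \<in> I" then show "(\<lambda>\<omega>. \<omega> (n + p)) \<in> measurable (PiM J (\<lambda>_. \<mu>)) \<mu>"
        using kI by (intro measurable_component_singleton) auto
    qed
    have rsm: "rs \<in> measurable PJ Pb" unfolding rs_def PJ_def Pb_def
    proof (rule measurable_restrict)
      fix n assume "n \<in> I" then show "(\<lambda>\<omega>. \<omega> n) \<in> measurable (PiM J (\<lambda>_. \<mu>)) \<mu>"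
        using kJ by (intro measurable_component_singleton) auto
    qed
    have dsh: "distr PJ Pb sh = Pb" unfolding PJ_def Pb_def sh_def
      using distr_PiM_reindex[of J "\<lambda>_. \<mu>" "\<lambda>k. k + p" I] P kI by (auto simp: inj_on_def)
    have drs: "distr PJ Pb rs = Pb" unfolding PJ_def Pb_def rs_def
      using distr_PiM_reindex[of J "\<lambda>_. \<mu>" "\<lambda>k. k" I] P kJ by (auto simp: inj_on_def)
    have Ash: "A e (sh \<omega>) = (SUP v\<in>D. \<Sum>k\<in>I. e k * q v (\<omega> (k+p)))" for \<omega>
      unfolding A_def sh_def by (intro SUP_cong refl sum.cong) auto
    have Ars: "A ne (rs \<omega>) = (SUP v\<in>D. \<Sum>k\<in>I. ne k * q v (\<omega> k))" for \<omega>
      unfolding A_def rs_def by (intro SUP_cong refl sum.cong) auto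
    have Amb: "A e' \<in> borel_measurable Pb" if "e' \<in> signs I" for e' unfolding Pb_def by (rule Am[OF that order_refl])
    have int1: "integrable PJ (\<lambda>\<omega>. A e (sh \<omega>))"
      by (rule PJ.integrable_const_bound[where B="real p * c"]) (use Ab[OF e] measurable_compose[OF shm Amb[OF e]] in auto)
    have int2: "integrable PJ (\<lambda>\<omega>. A ne (rs \<omega>))"
      by (rule PJ.integrable_const_bound[where B="real p * c"]) (use Ab[OF ne] measurable_compose[OF rsm Amb[OF ne]] in auto)
    have Heb: "He \<omega> \<le> A e (sh \<omega>) + A ne (rs \<omega>)" for \<omega>
    proof -
      have "He \<omega> = (SUP v\<in>D. (\<Sum>k\<in>I. e k * q v (\<omega> (k+p))) + (\<Sum>k\<in>I. ne k * q v (\<omega> k)))"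
        unfolding He_def
        by (intro SUP_cong refl) (simp add: sum.distrib[symmetric] ne_def algebra_simps sum_subtractf)
      also have "\<dots> \<le> (SUP v\<in>D. \<Sum>k\<in>I. e k * q v (\<omega> (k+p))) + (SUP v\<in>D. \<Sum>k\<in>I. ne k * q v (\<omega> k))"
        by (rule SUP_add_le[OF Dne]) (rule bdd_abs, rule Aeb[OF e], rule bdd_abs, rule Aeb[OF ne])
      finally show ?thesis unfolding Ash Ars .
    qed
    have "(\<integral>\<omega>. He \<omega> \<partial>PJ) \<le> (\<integral>\<omega>. A e (sh \<omega>) + A ne (rs \<omega>) \<partial>PJ)"
    proof (rule integral_mono)
      have Hem: "He \<in> borel_measurable PJ" using measurable_compose[OF Rm Hm] by (simp add: HR)
      show "integrable PJ He"
        by (rule PJ.integrable_const_bound[where B="real p * c"]) (use Hem Hb HR in \<open>auto simp: HR[symmetric]\<close>)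
    qed (use int1 int2 Heb in auto)
    also have "\<dots> = (\<integral>\<omega>. A e (sh \<omega>) \<partial>PJ) + (\<integral>\<omega>. A ne (rs \<omega>) \<partial>PJ)"
      by (rule Bochner_Integration.integral_add[OF int1 int2])
    also have "(\<integral>\<omega>. A e (sh \<omega>) \<partial>PJ) = (\<integral>x. A e x \<partial>Pb)"
      using integral_distr[OF shm Amb[OF e]] dsh by simp
    also have "(\<integral>\<omega>. A ne (rs \<omega>) \<partial>PJ) = (\<integral>x. A ne x \<partial>Pb)"
      using integral_distr[OF rsm Amb[OF ne]] drs by simp
    finally show ?thesis unfolding HHe ne_def .
  qed
  define ne where "ne e = (\<lambda>k\<in>I. - e k)" for e :: "nat \<Rightarrow> real"
  have nes: "ne e \<in> signs I" if "e \<in> signs I" for e using that unfolding signs_def ne_def by (auto simp: PiE_iff)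
  have nene: "ne (ne e) = e" if "e \<in> signs I" for e
    using that unfolding signs_def ne_def by (auto simp: PiE_iff extensional_def fun_eq_iff)
  have cs: "card (signs I) = 2 ^ p" unfolding signs_def using finI by (simp add: card_PiE cardI numeral_2_eq_2)
  have "real (card (signs I)) * (\<integral>w. H w \<partial>PJ) = (\<Sum>e\<in>signs I. \<integral>w. H w \<partial>PJ)" by simp
  also have "\<dots> \<le> (\<Sum>e\<in>signs I. (\<integral>x. A e x \<partial>Pb) + (\<integral>x. A (ne e) x \<partial>Pb))"
    unfolding ne_def by (intro sum_mono A2)
  also have "\<dots> = 2 * (\<Sum>e\<in>signs I. \<integral>x. A e x \<partial>Pb)"
  proof -
    have "(\<Sum>e\<in>signs I. \<integral>x. A (ne e) x \<partial>Pb) = (\<Sum>e\<in>signs I. \<integral>x. A e x \<partial>Pb)"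
      by (rule sum.reindex_bij_witness[of _ ne ne]) (auto simp: nes nene)
    then show ?thesis by (simp add: sum.distrib)
  qed
  also have "\<dots> = 2 * (\<integral>x. (\<Sum>e\<in>signs I. A e x) \<partial>Pb)"
    by (subst Bochner_Integration.integral_sum) (auto intro: Aint)
  finally have "(\<integral>w. H w \<partial>PJ) \<le> 2 * (\<integral>x. (\<Sum>e\<in>signs I. A e x) \<partial>Pb) / 2 ^ p"
    unfolding cs by (simp add: field_simps)
  also have "\<dots> = 2 * (\<integral>x. (\<Sum>e\<in>signs I. A e x) / 2 ^ p \<partial>Pb)" by simp
  finally have "(1 / real p) * (\<integral>w. H w \<partial>PJ) \<le> (1 / real p) * (2 * (\<integral>x. (\<Sum>e\<in>signs I. A e x) / 2 ^ p \<partial>Pb))"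
    using p by (intro mult_left_mono) auto
  with A1 show ?thesis unfolding z_def G_def A_def I_def Pb_def by simp
qed

lemma SUP_cmult:
  fixes f :: "'v \<Rightarrow> real"
  assumes c: "c > 0" and D: "D \<noteq> {}" and b: "bdd_above (f ` D)"
  shows "(SUP v\<in>D. c * f v) = c * (SUP v\<in>D. f v)"
proof (rule antisym)
  show "(SUP v\<in>D. c * f v) \<le> c * (SUP v\<in>D. f v)"
    using c by (intro cSUP_least D) (auto intro!: mult_left_mono cSUP_upper b)
  have b2: "bdd_above ((\<lambda>v. c * f v) ` D)"
  proof -
    obtain B where "\<forall>v\<in>D. f v \<le> B" using b by (auto simp: bdd_above_def)
    then show ?thesis using c by (intro bdd_aboveI2[of _ _ "c * B"]) (auto intro: mult_left_mono)
  qed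
  have "(SUP v\<in>D. f v) \<le> (SUP v\<in>D. c * f v) / c"
  proof (rule cSUP_least[OF D])
    fix v assume "v \<in> D"
    then have "c * f v \<le> (SUP v\<in>D. c * f v)" by (rule cSUP_upper[OF _ b2])
    then show "f v \<le> (SUP v\<in>D. c * f v) / c" using c by (simp add: field_simps)
  qed
  then show "c * (SUP v\<in>D. f v) \<le> (SUP v\<in>D. c * f v)" using c by (simp add: field_simps)
qed

lemma SUP_closure_eq:
  fixes f :: "'a::metric_space \<Rightarrow> real"
  assumes c: "continuous_on UNIV f" and D: "D \<subseteq> E" "E \<subseteq> closure D" "D \<noteq> {}"
    and b: "bdd_above (f ` E)"
  shows "(SUP v\<in>E. f v) = (SUP v\<in>D. f v)"
proof (rule antisym)
  have bD: "bdd_above (f ` D)" using b D(1) by (meson bdd_above_mono image_mono)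
  show "(SUP v\<in>E. f v) \<le> (SUP v\<in>D. f v)"
    using D by (intro cSUP_least) (auto intro!: le_SUP_closure[OF c D bD])
  show "(SUP v\<in>D. f v) \<le> (SUP v\<in>E. f v)"
    by (rule cSUP_subset_mono[OF D(3) b D(1)]) simp
qed

lemma AE_point:
  assumes "AE y in N. Q y" "{e} \<in> sets N" "measure N {e} > 0"
  shows "Q e"
proof (rule ccontr)
  assume nq: "\<not> Q e"
  from assms(1) obtain Z where Z: "{x \<in> space N. \<not> Q x} \<subseteq> Z" "emeasure N Z = 0" "Z \<in> sets N" by (rule AE_E)
  have "e \<in> space N" using sets.sets_into_space[OF assms(2)] by auto
  then have "{e} \<subseteq> Z" using Z nq by auto
  then have "emeasure N {e} \<le> emeasure N Z" by (intro emeasure_mono Z)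
  then have "emeasure N {e} = 0" using Z by simp
  then show False using assms(3) by (simp add: measure_def)
qed

definition Flm :: "(real^'n) set \<Rightarrow> nat \<Rightarrow> (nat \<Rightarrow> real^'n) \<Rightarrow> (nat \<Rightarrow> real) \<Rightarrow> real" where
  "Flm D p x e = (SUP v\<in>D. if bdd_above ((\<lambda>v. \<Sum>k\<in>{1..p}. e k * (x k \<bullet> v)) ` D) then \<Sum>k\<in>{1..p}. e k * (x k \<bullet> v) else 0)"

lemma bdd_nat_iff:
  fixes g :: "'v \<Rightarrow> real"
  assumes "countable D" "D \<noteq> {}"
  shows "bdd_above (g ` D) \<longleftrightarrow> (\<exists>N::nat. \<forall>n::nat. g (from_nat_into D n) \<le> real N)"
proof
  assume "bdd_above (g ` D)"
  then obtain B where B: "\<forall>v\<in>D. g v \<le> B" by (auto simp: bdd_above_def)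
  obtain N :: nat where "B \<le> real N" using real_arch_simple by blast
  then show "\<exists>N::nat. \<forall>n::nat. g (from_nat_into D n) \<le> real N"
    using B from_nat_into[OF assms(2)] by (intro exI[of _ N]) (auto intro: order_trans)
next
  assume "\<exists>N::nat. \<forall>n::nat. g (from_nat_into D n) \<le> real N"
  then obtain N :: nat where N: "\<forall>n. g (from_nat_into D n) \<le> real N" by blast
  show "bdd_above (g ` D)"
  proof (rule bdd_aboveI2)
    fix v assume "v \<in> D"
    then obtain n where "from_nat_into D n = v" using from_nat_into_surj[OF assms(1)] by blast
    then show "g v \<le> real N" using N by auto
  qed
qed

lemma W_transfer:
  fixes M :: "'w measure" and a :: "nat \<Rightarrow> 'w \<Rightarrow> real^'n" and eps :: "nat \<Rightarrow> 'w \<Rightarrow> real"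
    and E :: "(real^'n) set" and m :: nat and D :: "(real^'n) set"
  assumes PM: "prob_space M"
    and m2: "m \<ge> 2"
    and am: "\<And>i. i \<in> {1..m} \<Longrightarrow> a i \<in> borel_measurable M"
    and ind: "prob_space.indep_vars M (\<lambda>_. borel) a {1..m}"
    and id: "\<And>i. i \<in> {1..m} \<Longrightarrow> distr M borel (a i) = distr M borel (a 1)"
    and rad: "\<And>k. k \<in> {1..m div 2} \<Longrightarrow> rademacher M (eps k)"
    and inde: "prob_space.indep_vars M (\<lambda>_. borel) eps {1..m div 2}"
    and indset: "prob_space.indep_set M
           (sets (vimage_algebra (space M) (\<lambda>w. restrict (\<lambda>i. a i w) {1..m})
                   (PiM {1..m} (\<lambda>_. borel))))
           (sets (vimage_algebra (space M) (\<lambda>w. restrict (\<lambda>k. eps k w) {1..m div 2})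
                   (PiM {1..m div 2} (\<lambda>_. borel))))"
    and AEb: "AE w in M. bdd_above ((\<lambda>u. hvec m a eps w \<bullet> u) ` E)"
    and intW: "integrable M (\<lambda>w. SUP u\<in>E. hvec m a eps w \<bullet> u)"
    and Dc: "countable D" and DE: "D \<subseteq> E" "E \<subseteq> closure D" and Dne: "D \<noteq> {}"
  shows "AE x in PiM {1..m div 2} (\<lambda>_. distr M borel (brow a 1)).
            \<forall>e\<in>signs {1..m div 2}. bdd_above ((\<lambda>v. \<Sum>k\<in>{1..m div 2}. e k * (x k \<bullet> v)) ` D)"
    and "integrable (PiM {1..m div 2} (\<lambda>_. distr M borel (brow a 1)))
            (\<lambda>x. (\<Sum>e\<in>signs {1..m div 2}. Flm D (m div 2) x e) / 2 ^ (m div 2))"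
    and "Wmean M E (hvec m a eps) = (1 / sqrt (real (m div 2))) *
            (\<integral>x. (\<Sum>e\<in>signs {1..m div 2}. Flm D (m div 2) x e) / 2 ^ (m div 2) \<partial>PiM {1..m div 2} (\<lambda>_. distr M borel (brow a 1)))"
proof -
  interpret M: prob_space M by (rule PM)
  define p where "p = m div 2"
  have p1: "p \<ge> 1" using m2 by (simp add: p_def)
  define I where "I = {1..p}"
  have finI: "finite I" and cardI: "card I = p" by (auto simp: I_def)
  have browm[measurable]: "brow a k \<in> borel_measurable M" if "k \<in> I" for k
    using that by (intro brow_measurable am) (auto simp: I_def p_def)
  have epsm[measurable]: "eps k \<in> borel_measurable M" if "k \<in> I" for k
    using rad[of k] that by (simp add: rademacher_def I_def p_def)
  define \<mu> where "\<mu> = distr M borel (brow a 1)"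
  have P\<mu>: "prob_space \<mu>" unfolding \<mu>_def using p1 by (intro M.prob_space_distr browm) (auto simp: I_def)
  have s\<mu>: "sets \<mu> = sets borel" by (simp add: \<mu>_def)
  define R where "R = distr M borel (eps 1)"
  have e1: "1 \<in> I" "Suc 0 \<in> I" using p1 by (auto simp: I_def)
  have PR1: "prob_space R" unfolding R_def by (intro M.prob_space_distr epsm e1(1))
  have sR: "sets R = sets borel" by (simp add: R_def)
  have Rc: "measure R {c} = measure M {w \<in> space M. eps 1 w = c}" for c
    unfolding R_def by (subst measure_distr) (use e1 in \<open>auto intro!: epsm arg_cong[where f="measure M"]\<close>)
  have r1: "rademacher M (eps 1)" using rad[of 1] p1 by (simp add: p_def)
  have R1: "measure R {1} = 1/2" using r1 unfolding Rc rademacher_def by blast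
  have R2: "measure R {-1} = 1/2" using r1 unfolding Rc rademacher_def by blast
  define Pb where "Pb = PiM I (\<lambda>_. \<mu>)"
  define PR where "PR = PiM I (\<lambda>_. R)"
  interpret Pb: prob_space Pb unfolding Pb_def by (rule prob_space_PiM) (use P\<mu> in auto)
  interpret PR: prob_space PR unfolding PR_def by (rule prob_space_PiM) (use PR1 in auto)
  interpret PP: pair_sigma_finite Pb PR
    unfolding pair_sigma_finite_def
    using prob_space_imp_sigma_finite[OF Pb.prob_space_axioms] prob_space_imp_sigma_finite[OF PR.prob_space_axioms] by blast
  define \<Phi> where "\<Phi> w = (\<lambda>k\<in>I. brow a k w, \<lambda>k\<in>I. eps k w)" for w
  have sPb: "sets Pb = sets (PiM I (\<lambda>_. borel :: (real^'n) measure))" unfolding Pb_def by (intro sets_PiM_cong) (auto simp: s\<mu>)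
  have sPR: "sets PR = sets (PiM I (\<lambda>_. borel :: real measure))" unfolding PR_def by (intro sets_PiM_cong) (auto simp: sR)
  have sPP: "sets (Pb \<Otimes>\<^sub>M PR) = sets (PiM I (\<lambda>_. borel :: (real^'n) measure) \<Otimes>\<^sub>M PiM I (\<lambda>_. borel :: real measure))"
    by (intro sets_pair_measure_cong sPb sPR)
  have \<Phi>m: "\<Phi> \<in> measurable M (Pb \<Otimes>\<^sub>M PR)"
    unfolding measurable_cong_sets[OF refl sPP] \<Phi>_def
    by (intro measurable_Pair measurable_restrict browm epsm)
  have law: "distr M (Pb \<Otimes>\<^sub>M PR) \<Phi> = Pb \<Otimes>\<^sub>M PR"
  proof -
    have "distr M (Pb \<Otimes>\<^sub>M PR) \<Phi> = distr M (PiM I (\<lambda>_. borel) \<Otimes>\<^sub>M PiM I (\<lambda>_. borel)) \<Phi>"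
      by (intro distr_cong refl sPP)
    also have "\<dots> = Pb \<Otimes>\<^sub>M PR" unfolding \<Phi>_def I_def p_def Pb_def PR_def \<mu>_def R_def
      by (rule law_BE[OF PM m2 am ind id rad inde indset])
    finally show ?thesis .
  qed
  define S where "S v xe = (\<Sum>k\<in>I. snd xe k * (fst xe k \<bullet> v))" for v and xe :: "(nat \<Rightarrow> real^'n) \<times> (nat \<Rightarrow> real)"
  have compb: "(\<lambda>x. x k) \<in> borel_measurable Pb" if "k \<in> I" for k
    using measurable_component_singleton[OF that, of "\<lambda>_. \<mu>"] unfolding Pb_def measurable_cong_sets[OF refl s\<mu>] .
  have compr: "(\<lambda>e. e k) \<in> borel_measurable PR" if "k \<in> I" for k
    using measurable_component_singleton[OF that, of "\<lambda>_. R"] unfolding PR_def measurable_cong_sets[OF refl sR] .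
  have Sm[measurable]: "S v \<in> borel_measurable (Pb \<Otimes>\<^sub>M PR)" for v
    unfolding S_def
  proof (rule borel_measurable_sum)
    fix k assume k: "k \<in> I"
    have [measurable]: "(\<lambda>xe. fst xe k) \<in> borel_measurable (Pb \<Otimes>\<^sub>M PR)"
      by (rule measurable_compose[OF measurable_fst compb[OF k]])
    have [measurable]: "(\<lambda>xe. snd xe k) \<in> borel_measurable (Pb \<Otimes>\<^sub>M PR)"
      by (rule measurable_compose[OF measurable_snd compr[OF k]])
    show "(\<lambda>xe. snd xe k * (fst xe k \<bullet> v)) \<in> borel_measurable (Pb \<Otimes>\<^sub>M PR)" by measurable
  qed
  define dn where "dn = from_nat_into D"
  define bddp where "bddp xe = (\<exists>N::nat. \<forall>n::nat. S (dn n) xe \<le> real N)" for xe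
  have bddiff: "bdd_above ((\<lambda>v. S v xe) ` D) \<longleftrightarrow> bddp xe" for xe
    unfolding bddp_def dn_def by (rule bdd_nat_iff[OF Dc Dne])
  have bddpm[measurable]: "Measurable.pred (Pb \<Otimes>\<^sub>M PR) bddp"
    unfolding bddp_def by measurable
  define F2 where "F2 xe = (SUP v\<in>D. if bddp xe then S v xe else 0)" for xe
  have F2m: "F2 \<in> borel_measurable (Pb \<Otimes>\<^sub>M PR)"
    unfolding F2_def[abs_def]
  proof (rule borel_measurable_cSUP[OF Dc])
    fix v show "(\<lambda>xe. if bddp xe then S v xe else 0) \<in> borel_measurable (Pb \<Otimes>\<^sub>M PR)" by measurable
    fix xe show "bdd_above ((\<lambda>v. if bddp xe then S v xe else 0) ` D)"
      using bddiff[of xe] by (cases "bddp xe") auto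
  qed
  have S_eq: "S v (x, e) = (\<Sum>k\<in>{1..m div 2}. e k * (x k \<bullet> v))" for v x e
    by (simp add: S_def I_def p_def)
  have Flm_F2: "Flm D (m div 2) x e = F2 (x, e)" for x e
    unfolding Flm_def F2_def S_eq[symmetric] bddiff ..
  have sp: "sqrt (real p) > 0" using p1 by simp
  have hvS: "hvec m a eps w \<bullet> u = (1 / sqrt (real p)) * S u (\<Phi> w)" for w u
  proof -
    have "hvec m a eps w \<bullet> u = (1 / sqrt (real p)) * (\<Sum>k\<in>I. eps k w * (brow a k w \<bullet> u))"
      by (simp add: hvec_def p_def I_def inner_sum_left)
    also have "(\<Sum>k\<in>I. eps k w * (brow a k w \<bullet> u)) = S u (\<Phi> w)"
      unfolding S_def \<Phi>_def by (intro sum.cong) auto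
    finally show ?thesis .
  qed
  have AEM: "AE w in M. bddp (\<Phi> w) \<and> (SUP u\<in>E. hvec m a eps w \<bullet> u) = (1 / sqrt (real p)) * F2 (\<Phi> w)"
    using AEb
  proof eventually_elim
    fix w assume b: "bdd_above ((\<lambda>u. hvec m a eps w \<bullet> u) ` E)"
    then obtain B where B: "\<forall>u\<in>E. hvec m a eps w \<bullet> u \<le> B" by (auto simp: bdd_above_def)
    have bD: "bdd_above ((\<lambda>v. S v (\<Phi> w)) ` D)"
    proof (rule bdd_aboveI2)
      fix v assume "v \<in> D"
      then have "hvec m a eps w \<bullet> v \<le> B" using B DE by auto
      then have "(1 / sqrt (real p)) * S v (\<Phi> w) \<le> B" by (simp add: hvS)
      then show "S v (\<Phi> w) \<le> sqrt (real p) * B" using sp by (simp add: field_simps)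
    qed
    have cont: "continuous_on UNIV (\<lambda>u. hvec m a eps w \<bullet> u)" by (intro continuous_intros)
    have "(SUP u\<in>E. hvec m a eps w \<bullet> u) = (SUP u\<in>D. hvec m a eps w \<bullet> u)"
      by (rule SUP_closure_eq[OF cont DE Dne b])
    also have "\<dots> = (SUP u\<in>D. (1 / sqrt (real p)) * S u (\<Phi> w))" by (simp add: hvS)
    also have "\<dots> = (1 / sqrt (real p)) * (SUP u\<in>D. S u (\<Phi> w))" using sp by (intro SUP_cmult Dne bD) simp
    also have "(SUP u\<in>D. S u (\<Phi> w)) = F2 (\<Phi> w)" unfolding F2_def using bD bddiff by simp
    finally show "bddp (\<Phi> w) \<and> (SUP u\<in>E. hvec m a eps w \<bullet> u) = (1 / sqrt (real p)) * F2 (\<Phi> w)"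
      using bD bddiff by simp
  qed
  have fMm: "(\<lambda>w. SUP u\<in>E. hvec m a eps w \<bullet> u) \<in> borel_measurable M" using intW by auto
  have F2\<Phi>m: "(\<lambda>w. F2 (\<Phi> w)) \<in> borel_measurable M" using measurable_compose[OF \<Phi>m F2m] .
  have "integrable M (\<lambda>w. (1 / sqrt (real p)) * F2 (\<Phi> w))"
    by (rule integrable_cong_AE_imp[OF intW]) (use F2\<Phi>m AEM in \<open>auto elim: eventually_mono\<close>)
  then have "integrable M (\<lambda>w. sqrt (real p) * ((1 / sqrt (real p)) * F2 (\<Phi> w)))" by (rule integrable_mult_right)
  then have intF2M: "integrable M (\<lambda>w. F2 (\<Phi> w))" using sp by simp
  have intF2: "integrable (Pb \<Otimes>\<^sub>M PR) F2"
    using integrable_distr_eq[OF \<Phi>m F2m] intF2M law by simp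
  have Wm1: "Wmean M E (hvec m a eps) = (1 / sqrt (real p)) * (\<integral>xe. F2 xe \<partial>(Pb \<Otimes>\<^sub>M PR))"
  proof -
    have "Wmean M E (hvec m a eps) = (\<integral>w. (1 / sqrt (real p)) * F2 (\<Phi> w) \<partial>M)"
      unfolding Wmean_def by (rule integral_cong_AE) (use fMm F2\<Phi>m AEM in \<open>auto elim: eventually_mono\<close>)
    also have "\<dots> = (1 / sqrt (real p)) * (\<integral>w. F2 (\<Phi> w) \<partial>M)" by simp
    also have "(\<integral>w. F2 (\<Phi> w) \<partial>M) = (\<integral>xe. F2 xe \<partial>(Pb \<Otimes>\<^sub>M PR))"
      using integral_distr[OF \<Phi>m F2m] law by simp
    finally show ?thesis .
  qed
  have inner: "(\<integral>e. F2 (x, e) \<partial>PR) = (\<Sum>e\<in>signs I. Flm D (m div 2) x e) / 2 ^ p" if x: "x \<in> space Pb" for x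
  proof -
    have "(\<integral>e. F2 (x, e) \<partial>PR) = (\<Sum>e\<in>signs I. F2 (x, e)) / 2 ^ card I"
      unfolding PR_def by (rule integral_signs[OF finI PR1 sR R1 R2]) (use measurable_Pair2[OF F2m x] in \<open>simp add: PR_def\<close>)
    then show ?thesis by (simp add: Flm_F2 cardI)
  qed
  have Wm2: "Wmean M E (hvec m a eps) = (1 / sqrt (real p)) * (\<integral>x. (\<Sum>e\<in>signs I. Flm D (m div 2) x e) / 2 ^ p \<partial>Pb)"
  proof -
    have "(\<integral>xe. F2 xe \<partial>(Pb \<Otimes>\<^sub>M PR)) = (\<integral>x. (\<integral>e. F2 (x, e) \<partial>PR) \<partial>Pb)"
      by (rule PP.integral_fst'[OF intF2, symmetric])
    also have "\<dots> = (\<integral>x. (\<Sum>e\<in>signs I. Flm D (m div 2) x e) / 2 ^ p \<partial>Pb)"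
      by (rule Bochner_Integration.integral_cong[OF refl inner])
    finally show ?thesis using Wm1 by simp
  qed
  have int2: "integrable Pb (\<lambda>x. (\<Sum>e\<in>signs I. Flm D (m div 2) x e) / 2 ^ p)"
    using PP.integrable_fst'[OF intF2]
    by (rule Bochner_Integration.integrable_cong[THEN iffD1, OF refl inner, rotated])
  have "AE xe in distr M (Pb \<Otimes>\<^sub>M PR) \<Phi>. bddp xe"
    by (subst AE_distr_iff[OF \<Phi>m]) (use AEM in \<open>auto elim: eventually_mono\<close>)
  then have "AE xe in Pb \<Otimes>\<^sub>M PR. bddp xe" unfolding law .
  then have "AE x in Pb. AE e in PR. bddp (x, e)" by (rule PP.AE_pair)
  then have AE3: "AE x in Pb. \<forall>e\<in>signs I. bdd_above ((\<lambda>v. \<Sum>k\<in>{1..m div 2}. e k * (x k \<bullet> v)) ` D)"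
  proof (rule eventually_mono)
    fix x assume ae: "AE e in PR. bddp (x, e)"
    show "\<forall>e\<in>signs I. bdd_above ((\<lambda>v. \<Sum>k\<in>{1..m div 2}. e k * (x k \<bullet> v)) ` D)"
    proof
      fix e assume e: "e \<in> signs I"
      have "bddp (x, e)"
        using AE_point[OF ae] signs_singleton[OF finI PR1 sR R1 R2 e] by (simp add: PR_def)
      then show "bdd_above ((\<lambda>v. \<Sum>k\<in>{1..m div 2}. e k * (x k \<bullet> v)) ` D)"
        using bddiff[of "(x, e)"] by (simp add: S_eq)
    qed
  qed
  show "AE x in PiM {1..m div 2} (\<lambda>_. distr M borel (brow a 1)).
            \<forall>e\<in>signs {1..m div 2}. bdd_above ((\<lambda>v. \<Sum>k\<in>{1..m div 2}. e k * (x k \<bullet> v)) ` D)"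
    using AE3 unfolding Pb_def I_def p_def \<mu>_def .
  show "integrable (PiM {1..m div 2} (\<lambda>_. distr M borel (brow a 1)))
            (\<lambda>x. (\<Sum>e\<in>signs {1..m div 2}. Flm D (m div 2) x e) / 2 ^ (m div 2))"
    using int2 unfolding Pb_def I_def p_def \<mu>_def .
  show "Wmean M E (hvec m a eps) = (1 / sqrt (real (m div 2))) *
            (\<integral>x. (\<Sum>e\<in>signs {1..m div 2}. Flm D (m div 2) x e) / 2 ^ (m div 2) \<partial>PiM {1..m div 2} (\<lambda>_. distr M borel (brow a 1)))"
    using Wm2 unfolding Pb_def I_def p_def \<mu>_def .
qed

theorem theorem4:
  fixes M :: "'w measure" and a :: "nat \<Rightarrow> 'w \<Rightarrow> real^'n" and eps :: "nat \<Rightarrow> 'w \<Rightarrow> real"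
    and E :: "(real^'n) set" and m :: nat and t xi :: real
  assumes "prob_space M"
    and "m \<ge> 2"
    and "E \<noteq> {}"
    and "\<And>i. i \<in> {1..m} \<Longrightarrow> a i \<in> borel_measurable M"
    and "prob_space.indep_vars M (\<lambda>_. borel) a {1..m}"
    and "\<And>i. i \<in> {1..m} \<Longrightarrow> distr M borel (a i) = distr M borel (a 1)"
    and "\<And>k. k \<in> {1..m div 2} \<Longrightarrow> rademacher M (eps k)"
    and "prob_space.indep_vars M (\<lambda>_. borel) eps {1..m div 2}"
    and "prob_space.indep_set M
           (sets (vimage_algebra (space M) (\<lambda>w. restrict (\<lambda>i. a i w) {1..m})
                   (PiM {1..m} (\<lambda>_. borel))))
           (sets (vimage_algebra (space M) (\<lambda>w. restrict (\<lambda>k. eps k w) {1..m div 2})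
                   (PiM {1..m div 2} (\<lambda>_. borel))))"
    and "AE w in M. bdd_above ((\<lambda>u. hvec m a eps w \<bullet> u) ` E)"
    and "integrable M (\<lambda>w. SUP u\<in>E. hvec m a eps w \<bullet> u)"
    and "t > 0" and "xi > 0"
  shows "\<exists>S \<in> sets M. measure M S \<ge> 1 - exp (- 2 * t\<^sup>2) \<and>
           (\<forall>w \<in> S. (INF v\<in>E. Anorm m a w v) \<ge>
              xi * sqrt ((real m - 1) / 2) * Qxi M (2 * xi) E (brow a 1) - xi * t
              - 2 * Wmean M E (hvec m a eps))"
proof -
  note PM = assms(1)
  interpret M: prob_space M by (rule PM)
  note Ene = assms(3) and tpos = assms(12) and xipos = assms(13)
  note am = assms(4)
  define p where "p = m div 2"
  have p1: "p \<ge> 1" using assms(2) by (simp add: p_def)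
  have p2m: "2 * p \<le> m" by (simp add: p_def)
  have pm: "real m - 1 \<le> 2 * real p" unfolding p_def by linarith
  define I where "I = {1..p}"
  have finI: "finite I" and Ine: "I \<noteq> {}" and cardI: "card I = p" using p1 by (auto simp: I_def)
  have amI: "a (2*k-1) \<in> borel_measurable M" "a (2*k) \<in> borel_measurable M" if "k \<in> I" for k
    using that p2m by (auto intro!: am simp: I_def)
  have browm[measurable]: "brow a k \<in> borel_measurable M" if "k \<in> I" for k
    using amI[OF that] by (rule brow_measurable)
  define \<mu> where "\<mu> = distr M borel (brow a 1)"
  have P\<mu>: "prob_space \<mu>" unfolding \<mu>_def using p1 by (intro M.prob_space_distr browm) (auto simp: I_def)
  interpret \<mu>: prob_space \<mu> by (rule P\<mu>)
  have s\<mu>: "sets \<mu> = sets borel" by (simp add: \<mu>_def)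
  define Pb where "Pb = PiM I (\<lambda>_. \<mu>)"
  interpret Pb: prob_space Pb unfolding Pb_def by (rule prob_space_PiM) (use P\<mu> in auto)
  have sPb: "sets Pb = sets (PiM I (\<lambda>_. borel :: (real^'n) measure))" unfolding Pb_def by (intro sets_PiM_cong) (auto simp: s\<mu>)
  define Bv where "Bv w = (\<lambda>k\<in>I. brow a k w)" for w
  have Bvm: "Bv \<in> measurable M Pb" unfolding measurable_cong_sets[OF refl sPb] Bv_def
    by (intro measurable_restrict browm)
  have dB: "distr M Pb Bv = Pb"
  proof -
    have "distr M Pb Bv = distr M (PiM I (\<lambda>_. borel)) Bv" by (intro distr_cong refl sPb)
    also have "\<dots> = Pb" unfolding Pb_def Bv_def I_def p_def \<mu>_def by (rule law_B[OF PM assms(2) am assms(5) assms(6)])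
    finally show ?thesis .
  qed
  define gf where "gf s = min \<bar>s\<bar> xi" for s
  have gf01: "0 \<le> gf s" "gf s \<le> xi" for s using xipos by (auto simp: gf_def)
  define avg where "avg x v = (1 / real p) * (\<Sum>k\<in>I. gf (x k \<bullet> v))" for x :: "nat \<Rightarrow> real^'n" and v
  have avg01: "0 \<le> avg x v" "avg x v \<le> xi" for x v
  proof -
    have "(\<Sum>k\<in>I. gf (x k \<bullet> v)) \<le> (\<Sum>k\<in>I. xi)" by (intro sum_mono gf01)
    then have "(\<Sum>k\<in>I. gf (x k \<bullet> v)) \<le> real p * xi" using cardI by simp
    then show "avg x v \<le> xi" using p1 by (simp add: avg_def field_simps)
    show "0 \<le> avg x v" unfolding avg_def by (intro mult_nonneg_nonneg sum_nonneg gf01) auto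
  qed
  define G where "G v = (\<integral>y. gf (y \<bullet> v) \<partial>\<mu>)" for v
  have G01: "0 \<le> G v" "G v \<le> xi" for v
  proof -
    show "0 \<le> G v" unfolding G_def by (intro integral_nonneg_AE AE_I2 gf01)
    have "G v \<le> (\<integral>y. xi \<partial>\<mu>)" unfolding G_def
      by (intro integral_mono \<mu>.integrable_const_bound[where B=xi] AE_I2 gf01)
         (use xipos in \<open>auto simp: measurable_cong_sets[OF s\<mu> refl] gf_def abs_le_iff intro: gf01\<close>)
    then show "G v \<le> xi" by (simp add: \<mu>.prob_space)
  qed
  have Gc: "continuous_on UNIV G" unfolding G_def gf_def by (rule G_cont[OF P\<mu> s\<mu> xipos])
  obtain D where D: "countable D" "D \<subseteq> E" "E \<subseteq> closure D" by (rule separable)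
  have Dne: "D \<noteq> {}" using D Ene by auto
  define z where "z x = (SUP v\<in>D. G v - avg x v)" for x
  have bddz: "bdd_above ((\<lambda>v. G v - avg x v) ` D)" for x
  proof (rule bdd_aboveI2)
    fix v show "G v - avg x v \<le> xi" using G01(2)[of v] avg01(1)[of x v] by linarith
  qed
  have zB: "\<bar>z x\<bar> \<le> xi" for x
  proof -
    have "z x \<le> xi" unfolding z_def
    proof (rule cSUP_least[OF Dne])
      fix v show "G v - avg x v \<le> xi" using G01(2)[of v] avg01(1)[of x v] by linarith
    qed
    moreover have "-xi \<le> z x"
    proof -
      obtain d where "d \<in> D" using Dne by auto
      then have "G d - avg x d \<le> z x" unfolding z_def by (rule cSUP_upper[OF _ bddz])
      then show ?thesis using G01[of d] avg01[of x d] by linarith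
    qed
    ultimately show ?thesis by auto
  qed
  define Ez where "Ez = (\<integral>x. z x \<partial>Pb)"
  define s0 where "s0 = xi * t / sqrt (real p)"
  define S where "S = {w\<in>space M. z (Bv w) < Ez + s0}"
  define Wm where "Wm = Wmean M E (hvec m a eps)"
  define Qv where "Qv = Qxi M (2 * xi) E (brow a 1)"
  have compm: "(\<lambda>x. x k) \<in> borel_measurable Pb" if k: "k \<in> I" for k
    using measurable_component_singleton[OF k, of "\<lambda>_. \<mu>"] unfolding Pb_def measurable_cong_sets[OF refl s\<mu>] .
  have gfm: "(\<lambda>y::real^'n. gf (y \<bullet> v)) \<in> borel_measurable borel" for v unfolding gf_def by measurable
  have avgm: "(\<lambda>x. avg x v) \<in> borel_measurable Pb" for v
    unfolding avg_def
    by (intro borel_measurable_times borel_measurable_const borel_measurable_sum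
        measurable_compose[OF compm gfm])
  have zm[measurable]: "z \<in> borel_measurable Pb"
    unfolding z_def[abs_def]
    by (rule borel_measurable_cSUP[OF D(1)]) (auto intro!: borel_measurable_diff avgm bddz)
  have avgd: "\<bar>avg (x(k:=y)) v - avg x v\<bar> \<le> xi / real p" if k: "k \<in> I" for x k y v
  proof -
    have 1: "(\<Sum>j\<in>I. gf ((x(k:=y)) j \<bullet> v)) = gf (y \<bullet> v) + (\<Sum>j\<in>I-{k}. gf (x j \<bullet> v))"
      by (simp add: sum.remove[OF finI k])
    have 2: "(\<Sum>j\<in>I. gf (x j \<bullet> v)) = gf (x k \<bullet> v) + (\<Sum>j\<in>I-{k}. gf (x j \<bullet> v))"
      by (simp add: sum.remove[OF finI k])
    have "avg (x(k:=y)) v - avg x v = (gf (y \<bullet> v) - gf (x k \<bullet> v)) / real p"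
      unfolding avg_def 1 2 by (simp add: add_divide_distrib diff_divide_distrib)
    moreover have "\<bar>gf (y \<bullet> v) - gf (x k \<bullet> v)\<bar> \<le> xi"
      using gf01[of "y \<bullet> v"] gf01[of "x k \<bullet> v"] by linarith
    ultimately show ?thesis using p1 by (simp add: divide_right_mono abs_divide)
  qed
  have zd: "\<bar>z (x(k:=y)) - z x\<bar> \<le> xi / real p" if k: "k \<in> I" for x k y
  proof -
    have "z (x(k:=y)) \<le> z x + xi / real p" unfolding z_def
    proof (rule SUP_le_SUP_plus[OF Dne bddz])
      fix v show "G v - avg (x(k:=y)) v \<le> G v - avg x v + xi / real p"
        using avgd[OF k, of x y v] by linarith
    qed
    moreover have "z x \<le> z (x(k:=y)) + xi / real p" unfolding z_def
    proof (rule SUP_le_SUP_plus[OF Dne bddz])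
      fix v show "G v - avg x v \<le> G v - avg (x(k:=y)) v + xi / real p"
        using avgd[OF k, of x y v] by linarith
    qed
    ultimately show ?thesis by linarith
  qed
  have s0pos: "s0 > 0" using xipos tpos p1 by (simp add: s0_def)
  have xip: "xi / real p > 0" using xipos p1 by simp
  have mcd: "measure Pb {x\<in>space Pb. z x \<ge> Ez + s0} \<le> exp (-2 * s0\<^sup>2 / (real (card I) * (xi / real p)\<^sup>2))"
    unfolding Pb_def Ez_def
    by (rule mcdiarmid[OF P\<mu> finI Ine xip s0pos]) (use zm zB zd in \<open>auto simp: Pb_def\<close>)
  have "-2 * s0\<^sup>2 / (real (card I) * (xi / real p)\<^sup>2) = - 2 * t\<^sup>2"
    using p1 xipos by (simp add: cardI s0_def power_divide field_simps power2_eq_square)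
  with mcd have mcd': "measure Pb {x\<in>space Pb. z x \<ge> Ez + s0} \<le> exp (- 2 * t\<^sup>2)" by simp
  have F4: "S \<in> sets M \<and> measure M S \<ge> 1 - exp (- 2 * t\<^sup>2)"
  proof -
    define T where "T = {w\<in>space M. z (Bv w) \<ge> Ez + s0}"
    have Tm: "T \<in> sets M" unfolding T_def using Bvm by measurable
    have ST: "S = space M - T" by (auto simp: S_def T_def)
    have "T = Bv -` {x\<in>space Pb. z x \<ge> Ez + s0} \<inter> space M"
      using measurable_space[OF Bvm] by (auto simp: T_def)
    then have "measure M T = measure (distr M Pb Bv) {x\<in>space Pb. z x \<ge> Ez + s0}"
      by (simp add: measure_distr[OF Bvm])
    then have "measure M T \<le> exp (- 2 * t\<^sup>2)" using mcd' by (simp add: dB)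
    moreover have "measure M S = 1 - measure M T" unfolding ST by (rule M.prob_compl[OF Tm])
    moreover have "S \<in> sets M" unfolding ST using Tm by auto
    ultimately show ?thesis by simp
  qed
  have F5: "Anorm m a w v \<ge> sqrt (real p) * (G v - z (Bv w))" if w: "w \<in> space M" and v: "v \<in> E" for w v
  proof -
    have "Anorm m a w v \<ge> (1 / sqrt (real p)) * (\<Sum>k\<in>{1..p}. \<bar>brow a k w \<bullet> v\<bar>)"
      by (rule anorm_lower[OF p1 p2m])
    moreover have "(\<Sum>k\<in>{1..p}. \<bar>brow a k w \<bullet> v\<bar>) \<ge> (\<Sum>k\<in>I. gf (Bv w k \<bullet> v))"
      unfolding I_def by (intro sum_mono) (auto simp: gf_def Bv_def I_def)
    moreover have "(\<Sum>k\<in>I. gf (Bv w k \<bullet> v)) = real p * avg (Bv w) v" using p1 by (simp add: avg_def)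
    ultimately have "real p * avg (Bv w) v \<le> sqrt (real p) * Anorm m a w v"
      using p1 by (auto simp: field_simps)
    moreover have "real p = sqrt (real p) * sqrt (real p)" by simp
    ultimately have "sqrt (real p) * (sqrt (real p) * avg (Bv w) v) \<le> sqrt (real p) * Anorm m a w v"
      by (simp add: mult.assoc[symmetric])
    then have 1: "Anorm m a w v \<ge> sqrt (real p) * avg (Bv w) v"
      using p1 by (simp add: mult_le_cancel_left_pos)
    have cont: "continuous_on UNIV (\<lambda>v. G v - avg (Bv w) v)"
      unfolding avg_def gf_def by (intro continuous_intros Gc)
    have "G v - avg (Bv w) v \<le> z (Bv w)" unfolding z_def
      by (rule le_SUP_closure[OF cont D(2,3) Dne bddz v])
    then have "sqrt (real p) * (G v - z (Bv w)) \<le> sqrt (real p) * avg (Bv w) v"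
      by (intro mult_left_mono) auto
    then show ?thesis using 1 by linarith
  qed
  have F6: "G v \<ge> xi * Qv" if v: "v \<in> E" for v
  proof -
    define A where "A = {y \<in> space \<mu>. 2 * xi \<le> \<bar>y \<bullet> v\<bar>}"
    have Am: "A \<in> sets \<mu>"
    proof -
      have "A = {y \<in> space (borel :: (real^'n) measure). 2 * xi \<le> \<bar>y \<bullet> v\<bar>}" by (simp add: A_def \<mu>_def)
      also have "\<dots> \<in> sets borel" by measurable
      finally show ?thesis using s\<mu> by simp
    qed
    have "Qv \<le> measure M {w \<in> space M. \<bar>brow a 1 w \<bullet> v\<bar> \<ge> 2 * xi}"
      unfolding Qv_def Qxi_def by (rule cINF_lower[OF _ v]) (auto intro!: bdd_belowI[of _ 0])
    also have "\<dots> = measure \<mu> A"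
    proof -
      have b1: "brow a 1 \<in> borel_measurable M" using p1 by (intro browm) (auto simp: I_def)
      have "A \<in> sets borel" using Am s\<mu> by simp
      then have "measure \<mu> A = measure M (brow a 1 -` A \<inter> space M)"
        unfolding \<mu>_def by (rule measure_distr[OF b1])
      moreover have "brow a 1 -` A \<inter> space M = {w \<in> space M. \<bar>brow a 1 w \<bullet> v\<bar> \<ge> 2 * xi}"
        by (auto simp: A_def \<mu>_def)
      ultimately show ?thesis by simp
    qed
    finally have 1: "Qv \<le> measure \<mu> A" .
    have "xi * measure \<mu> A = (\<integral>y. xi * indicator A y \<partial>\<mu>)"
      using Am by simp
    also have "\<dots> \<le> G v" unfolding G_def
    proof (rule integral_mono)
      show "integrable \<mu> (\<lambda>y. xi * indicator A y)" using Am by (intro integrable_mult_right integrable_real_indicator) (auto simp: \<mu>.emeasure_eq_measure)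
      show "integrable \<mu> (\<lambda>y. gf (y \<bullet> v))"
        by (intro \<mu>.integrable_const_bound[where B=xi] AE_I2)
           (use xipos in \<open>auto simp: measurable_cong_sets[OF s\<mu> refl] gf_def\<close>)
      fix y show "xi * indicator A y \<le> gf (y \<bullet> v)"
        using xipos by (auto simp: indicator_def A_def gf_def)
    qed
    finally show ?thesis using 1 xipos by (smt (verit) mult_left_mono)
  qed
  have Q0: "Qv \<ge> 0" unfolding Qv_def Qxi_def by (rule cINF_greatest[OF Ene]) simp
  have F7: "sqrt (real p) * Ez \<le> 2 * Wm"
  proof -
    define A where "A e x = (SUP v\<in>D. \<Sum>k\<in>I. e k * gf (x k \<bullet> v))" for e x
    define avA where "avA x = (\<Sum>e\<in>signs I. A e x) / 2 ^ p" for x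
    define avF where "avF x = (\<Sum>e\<in>signs I. Flm D p x e) / 2 ^ p" for x
    have sym: "Ez \<le> (2 / real p) * (\<integral>x. avA x \<partial>Pb)"
      using symmetrization[OF P\<mu> p1 D(1) Dne, of "\<lambda>v y. gf (y \<bullet> v)" xi] gf01 gfm
      unfolding Ez_def z_def G_def avg_def avA_def A_def I_def Pb_def by (simp add: measurable_cong_sets[OF s\<mu> refl])
    have WT: "AE x in Pb. \<forall>e\<in>signs I. bdd_above ((\<lambda>v. \<Sum>k\<in>I. e k * (x k \<bullet> v)) ` D)"
        "integrable Pb avF" "Wm = (1 / sqrt (real p)) * (\<integral>x. avF x \<partial>Pb)"
      using W_transfer[OF assms(1,2,4-11) D(1) D(2,3) Dne]
      unfolding Pb_def I_def p_def \<mu>_def avF_def Wm_def by auto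
    have eb: "\<bar>e k\<bar> = 1" if "e \<in> signs I" "k \<in> I" for e k
    proof -
      have "e k \<in> {-1, 1}" using that unfolding signs_def by blast
      then show ?thesis by auto
    qed
    have Aeb: "\<bar>\<Sum>k\<in>I. e k * gf (x k \<bullet> v)\<bar> \<le> real p * xi" if e: "e \<in> signs I" for e v x
    proof -
      have "\<bar>\<Sum>k\<in>I. e k * gf (x k \<bullet> v)\<bar> \<le> (\<Sum>k\<in>I. \<bar>e k * gf (x k \<bullet> v)\<bar>)" by (rule sum_abs)
      also have "\<dots> \<le> (\<Sum>k\<in>I. xi)" using gf01 eb[OF e] by (intro sum_mono) (simp add: abs_mult)
      finally show ?thesis using cardI by simp
    qed
    have Am: "A e \<in> borel_measurable Pb" if e: "e \<in> signs I" for e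
      unfolding A_def[abs_def]
    proof (rule borel_measurable_cSUP[OF D(1)])
      fix v show "(\<lambda>x. \<Sum>k\<in>I. e k * gf (x k \<bullet> v)) \<in> borel_measurable Pb"
        by (intro borel_measurable_sum borel_measurable_times borel_measurable_const measurable_compose[OF compm gfm])
      fix x show "bdd_above ((\<lambda>v. \<Sum>k\<in>I. e k * gf (x k \<bullet> v)) ` D)"
        by (rule bdd_aboveI2[of _ _ "real p * xi"]) (use Aeb[OF e] in \<open>auto simp: abs_le_iff\<close>)
    qed
    have Ab: "\<bar>A e x\<bar> \<le> real p * xi" if e: "e \<in> signs I" for e x
      unfolding A_def by (rule SUP_abs_bound[OF Dne Aeb[OF e]])
    have avAm: "avA \<in> borel_measurable Pb" unfolding avA_def[abs_def]
      by (intro borel_measurable_divide borel_measurable_const borel_measurable_sum Am)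
    have avAb: "\<bar>avA x\<bar> \<le> real p * xi" for x
    proof -
      have "\<bar>\<Sum>e\<in>signs I. A e x\<bar> \<le> real (card (signs I)) * (real p * xi)"
        by (rule sum_abs_bound) (rule Ab)
      moreover have "card (signs I) = 2 ^ p" unfolding signs_def using finI by (simp add: card_PiE cardI numeral_2_eq_2)
      ultimately show ?thesis by (simp add: avA_def abs_divide field_simps)
    qed
    have avAint: "integrable Pb avA" by (rule Pb.integrable_const_bound[where B="real p * xi"]) (use avAb avAm in auto)
    have lip: "\<bar>gf u - gf u'\<bar> \<le> \<bar>u - u'\<bar>" for u u' unfolding gf_def min_def by (auto simp: abs_if)
    have "(\<integral>x. avA x \<partial>Pb) \<le> (\<integral>x. avF x \<partial>Pb)"
    proof (rule integral_mono_AE[OF avAint WT(2)])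
      show "AE x in Pb. avA x \<le> avF x" using WT(1)
      proof eventually_elim
        fix x assume bd: "\<forall>e\<in>signs I. bdd_above ((\<lambda>v. \<Sum>k\<in>I. e k * (x k \<bullet> v)) ` D)"
        have "(\<Sum>e\<in>signs I. A e x) \<le> (\<Sum>e\<in>signs I. SUP v\<in>D. \<Sum>k\<in>I. e k * (x k \<bullet> v))"
          unfolding A_def by (rule contraction[OF finI Dne lip]) (use xipos bd in \<open>auto simp: gf_def\<close>)
        also have "\<dots> = (\<Sum>e\<in>signs I. Flm D p x e)"
          using bd by (intro sum.cong refl) (simp add: Flm_def I_def)
        finally show "avA x \<le> avF x" unfolding avA_def avF_def by (simp add: divide_right_mono)
      qed
    qed
    then have "(2 / real p) * (\<integral>x. avA x \<partial>Pb) \<le> (2 / real p) * (\<integral>x. avF x \<partial>Pb)"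
      by (intro mult_left_mono) auto
    then have "Ez \<le> (2 / real p) * (\<integral>x. avF x \<partial>Pb)" using sym by linarith
    then have "sqrt (real p) * Ez \<le> sqrt (real p) * ((2 / real p) * (\<integral>x. avF x \<partial>Pb))"
      by (intro mult_left_mono) auto
    also have "\<dots> = 2 * ((1 / sqrt (real p)) * (\<integral>x. avF x \<partial>Pb))"
    proof -
      have "sqrt (real p) * (2 / real p) = 2 * (1 / sqrt (real p))"
        using p1 by (simp add: field_simps real_sqrt_mult[symmetric])
      then show ?thesis by (simp only: mult.assoc[symmetric])
    qed
    finally show ?thesis using WT(3) by simp
  qed
  have sp: "sqrt (real p) > 0" using p1 by simp
  have ss0: "sqrt (real p) * s0 = xi * t" using sp by (simp add: s0_def)
  have sq: "sqrt ((real m - 1) / 2) \<le> sqrt (real p)" using pm by (intro real_sqrt_le_mono) simp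
  have "xi * sqrt ((real m - 1) / 2) * Qv - xi * t - 2 * Wm \<le> Anorm m a w v" if w: "w \<in> S" and v: "v \<in> E" for w v
  proof -
    have wM: "w \<in> space M" and zw: "z (Bv w) < Ez + s0" using w by (auto simp: S_def)
    have "xi * sqrt ((real m - 1) / 2) * Qv \<le> xi * sqrt (real p) * Qv"
      using sq xipos Q0 by (intro mult_right_mono mult_left_mono) auto
    also have "\<dots> = sqrt (real p) * (xi * Qv)" by simp
    also have "\<dots> \<le> sqrt (real p) * G v" using F6[OF v] sp by (intro mult_left_mono) auto
    finally have 1: "xi * sqrt ((real m - 1) / 2) * Qv \<le> sqrt (real p) * G v" .
    have 2: "sqrt (real p) * z (Bv w) \<le> sqrt (real p) * (Ez + s0)" using zw sp by (intro mult_left_mono) auto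
    show ?thesis using 1 2 F5[OF wM v] F7 ss0 by (simp add: algebra_simps)
  qed
  then show ?thesis using F4 Ene unfolding Wm_def Qv_def
    by (intro bexI[of _ S]) (auto intro!: cINF_greatest)
qed

end
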